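(* Consider either the pair ($\Phi_\lambda=\Phi_{+,\lambda}$, $\Psi_\mu=\Psi_{+,\mu}$) or the pair ($\Phi_\lambda=\Phi_{0,\lambda}$, $\Psi_\mu=\Psi_{0,\mu}$), with arbitrary $\lambda,\mu>0$. (i) Let $x^*$ be a local minimizer of (P) with $F(x^* )<\infty$, let $J_*=\{i:(Bx^*-b)_i\ne0\}$, $\bar J_*=[r]\setminus J_*$, and suppose $\{x: x\in\operatorname{ri}(\operatorname{dom}f),\ Ax\in\operatorname{ri}(\operatorname{dom}g),\ (Bx-b)_{\bar J_*}\le0\}\ne\emptyset$ (in the $\Phi_{+,\lambda}$ case), resp. $\{x: x\in\operatorname{ri}(\operatorname{dom}f),\ Ax\in\operatorname{ri}(\operatorname{dom}g),\ (Bx-b)_{\bar J_*}=0\}\ne\emptyset$ (in the $\Phi_{0,\lambda}$ case). Then there exist $y^*\in\partial g(Ax^* )$ and $z^*\in\partial\Phi_\lambda(Bx^*-b)$ such that $w^*=[y^*;z^*]$ is a local minimizer of (D), and $\Theta(x^* )=-\Xi(w^* )$. (ii) Let $w^*=[y^*;z^*]$ be a local minimizer of (D) with $G(w^* )<\infty$, let $T_*=\{i:z^*_i\ne0\}$, $\bar T_*=[r]\setminus T_*$, and suppose $\{w=[y;z]: -A^\top y-B^\top z\in\operatorname{ri}(\operatorname{dom}f^* ),\ y\in\operatorname{ri}(\operatorname{dom}g^* ),\ z_{\bar T_*}=0,\ z_{T_*}\ge0\}\ne\emptyset$ (in the $\Psi_{+,\mu}$ case), resp. the same set without the constraint $z_{T_*}\ge0$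 (in the $\Psi_{0,\mu}$ case). Then there exists $x^*\in\partial f^*(-A^\top y^*-B^\top z^* )$ that is a local minimizer of (P), and $\Theta(x^* )=-\Xi(w^* )$. In all Slater-type conditions, "$\operatorname{ri}$" may be omitted for a function that is polyhedral.
   Context: Let $f:\mathbb R^n\to(-\infty,\infty]$, $g:\mathbb R^m\to(-\infty,\infty]$ be proper, lsc and convex with conjugates $f^*(q)=\sup_x\{\langle q,x\rangle-f(x)\}$, $g^*$; $A\in\mathbb R^{m\times n}$, $B\in\mathbb R^{r\times n}$, $b\in\mathbb R^r$. $\Phi_{0,\lambda}(u)=\sum_i\lambda_i\mathbf 1_{\{u_i\ne0\}}$, $\Phi_{+,\lambda}(u)=\sum_i\lambda_i\mathbf 1_{\{u_i>0\}}$, $\Psi_{0,\mu}(z)=\sum_i\mu_i\mathbf 1_{\{z_i\ne0\}}$, $\Psi_{+,\mu}(z)=\Psi_{0,\mu}(z)+\delta(z\mid\mathbb R^r_+)$. $\Theta(x)=f(x)+g(Ax)$; (P) is $\min_x F(x)=\Theta(x)+\Phi_\lambda(Bx-b)$. For $w=[y;z]\in\mathbb R^m\times\mathbb R^r$, $\Xi(w)=f^*(-A^\top y-B^\top z)+g^*(y)+\langle b,z\rangle$; (D) is $\min_w G(w)=\Xi(w)+\Psi_\mu(z)$. $\partial$ denotes the limiting subdifferential (convex subdifferential for convex functions); $\partial\Phi_{0,\lambda}(u)=\{z:z_i\in\mathbb R\text{ if }u_i=0,\ z_i=0\text{ otherwise}\}$, $\partial\Phi_{+,\lambda}(u)=\{z:z_i\in\mathbb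 R_+\text{ if }u_i=0,\ z_i=0\text{ otherwise}\}$. $\operatorname{ri}$ denotes relative interior. *)

theory Defs
  imports "HOL-Analysis.Analysis"
begin

definition edom :: "('a \<Rightarrow> ereal) \<Rightarrow> 'a set" where
  "edom h = {x. h x < \<infinity>}"

definition proper_fun :: "('a \<Rightarrow> ereal) \<Rightarrow> bool" where
  "proper_fun h \<longleftrightarrow> (\<forall>x. h x \<noteq> -\<infinity>) \<and> (\<exists>x. h x < \<infinity>)"

definition lsc_fun :: "('a::topological_space \<Rightarrow> ereal) \<Rightarrow> bool" where
  "lsc_fun h \<longleftrightarrow> (\<forall>x t. t < h x \<longrightarrow> eventually (\<lambda>y. t < h y) (at x))"

definition epigraph :: "('a \<Rightarrow> ereal) \<Rightarrow> ('a \<times> real) set" where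
  "epigraph h = {(x, t). h x \<le> ereal t}"

definition convex_fun :: "('a::real_vector \<Rightarrow> ereal) \<Rightarrow> bool" where
  "convex_fun h \<longleftrightarrow> convex (epigraph h)"

definition polyhedral_fun :: "('a::euclidean_space \<Rightarrow> ereal) \<Rightarrow> bool" where
  "polyhedral_fun h \<longleftrightarrow> polyhedron (epigraph h)"

definition conj :: "('a::real_inner \<Rightarrow> ereal) \<Rightarrow> 'a \<Rightarrow> ereal" where
  "conj h q = (SUP x. ereal (q \<bullet> x) - h x)"

definition csubdiff :: "('a::real_inner \<Rightarrow> ereal) \<Rightarrow> 'a \<Rightarrow> 'a set" where
  "csubdiff h x = {v. \<bar>h x\<bar> \<noteq> \<infinity> \<and> (\<forall>u. h x + ereal (v \<bullet> (u - x)) \<le> h u)}"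

definition slater_dom :: "('a::euclidean_space \<Rightarrow> ereal) \<Rightarrow> 'a set" where
  "slater_dom h = (if polyhedral_fun h then edom h else rel_interior (edom h))"

(* the penalties; pos = True selects Phi_+ / Psi_+, pos = False selects Phi_0 / Psi_0 *)
definition Phi :: "bool \<Rightarrow> real^'r \<Rightarrow> real^'r \<Rightarrow> real" where
  "Phi pos lam u = (if pos then (\<Sum>i\<in>UNIV. if u $ i > 0 then lam $ i else 0)
                    else (\<Sum>i\<in>UNIV. if u $ i \<noteq> 0 then lam $ i else 0))"

definition Psi :: "bool \<Rightarrow> real^'r \<Rightarrow> real^'r \<Rightarrow> ereal" where
  "Psi pos mu z = ereal (\<Sum>i\<in>UNIV. if z $ i \<noteq> 0 then mu $ i else 0)
                  + (if pos \<and> \<not> (\<forall>i. z $ i \<ge> 0) then \<infinity> else 0)"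

(* subdifferential of Phi, as given explicitly in the paper *)
definition subdiff_Phi :: "bool \<Rightarrow> real^'r \<Rightarrow> (real^'r) set" where
  "subdiff_Phi pos u = {z. \<forall>i. (u $ i = 0 \<longrightarrow> (pos \<longrightarrow> z $ i \<ge> 0)) \<and> (u $ i \<noteq> 0 \<longrightarrow> z $ i = 0)}"

definition Theta :: "(real^'n \<Rightarrow> ereal) \<Rightarrow> (real^'m \<Rightarrow> ereal) \<Rightarrow> real^'n^'m \<Rightarrow> real^'n \<Rightarrow> ereal" where
  "Theta f g A x = f x + g (A *v x)"

definition FP :: "bool \<Rightarrow> (real^'n \<Rightarrow> ereal) \<Rightarrow> (real^'m \<Rightarrow> ereal) \<Rightarrow> real^'n^'m
     \<Rightarrow> real^'n^'r \<Rightarrow> real^'r \<Rightarrow> real^'r \<Rightarrow> real^'n \<Rightarrow> ereal" where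
  "FP pos f g A B b lam x = Theta f g A x + ereal (Phi pos lam (B *v x - b))"

definition Xi :: "(real^'n \<Rightarrow> ereal) \<Rightarrow> (real^'m \<Rightarrow> ereal) \<Rightarrow> real^'n^'m
     \<Rightarrow> real^'n^'r \<Rightarrow> real^'r \<Rightarrow> (real^'m) \<times> (real^'r) \<Rightarrow> ereal" where
  "Xi f g A B b w = conj f (- (transpose A *v fst w) - transpose B *v snd w)
                    + conj g (fst w) + ereal (b \<bullet> snd w)"

definition GD :: "bool \<Rightarrow> (real^'n \<Rightarrow> ereal) \<Rightarrow> (real^'m \<Rightarrow> ereal) \<Rightarrow> real^'n^'m
     \<Rightarrow> real^'n^'r \<Rightarrow> real^'r \<Rightarrow> real^'r \<Rightarrow> (real^'m) \<times> (real^'r) \<Rightarrow> ereal" where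
  "GD pos f g A B b mu w = Xi f g A B b w + Psi pos mu (snd w)"

definition local_min :: "('a::metric_space \<Rightarrow> ereal) \<Rightarrow> 'a \<Rightarrow> bool" where
  "local_min h x \<longleftrightarrow> (\<exists>e>0. \<forall>y. dist y x < e \<longrightarrow> h x \<le> h y)"

end

theory Submission
  imports Defs
begin


lemma ri_min_const:
  fixes D :: "'a::euclidean_space set"
  assumes "xo \<in> rel_interior D" "\<forall>x\<in>D. a \<bullet> xo \<le> a \<bullet> x" "x \<in> D"
  shows "a \<bullet> x = a \<bullet> xo"
proof -
  obtain e where e: "e > 0" "ball xo e \<inter> affine hull D \<subseteq> D"
    using assms(1) unfolding mem_rel_interior_ball by auto
  have xoD: "xo \<in> D" using assms(1) rel_interior_subset by auto
  define t where "t = e / (2 * (norm (x - xo) + 1))"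
  have np: "norm (x - xo) + 1 > 0" by (metis add_pos_nonneg norm_ge_zero zero_less_one add.commute)
  then have t0: "t > 0" using e unfolding t_def by simp
  have tn: "t * norm (x - xo) < e"
  proof -
    have "t * norm (x - xo) \<le> t * (norm (x - xo) + 1)" using t0 by simp
    also have "\<dots> = e / 2" using np unfolding t_def by (simp add: field_simps)
    finally show ?thesis using e by simp
  qed
  define y where "y = (1 + t) *\<^sub>R xo + (- t) *\<^sub>R x"
  have "y \<in> affine hull D"
    unfolding y_def
    by (rule mem_affine[OF affine_affine_hull]) (auto simp: hull_inc xoD assms(3))
  moreover have "y \<in> ball xo e"
  proof -
    have "xo - y = t *\<^sub>R (x - xo)" unfolding y_def by (simp add: algebra_simps)
    then have "dist xo y = t * norm (x - xo)" using t0 by (simp add: dist_norm)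
    then show ?thesis using tn by simp
  qed
  ultimately have "y \<in> D" using e by auto
  then have "a \<bullet> xo \<le> a \<bullet> y" using assms(2) by auto
  also have "a \<bullet> y = a \<bullet> xo - t * (a \<bullet> x - a \<bullet> xo)"
    unfolding y_def by (simp add: inner_add_right algebra_simps)
  finally have "t * (a \<bullet> x - a \<bullet> xo) \<le> 0" by simp
  then have "a \<bullet> x \<le> a \<bullet> xo" using t0 by (simp add: mult_le_0_iff)
  moreover have "a \<bullet> xo \<le> a \<bullet> x" using assms(2,3) by auto
  ultimately show ?thesis by simp
qed


lemma not_ri_lemma:
  fixes V :: "(real \<times> real) set"
  assumes "(t0, u0) \<in> V" "(t0 + 1, u0) \<in> V" "\<forall>t. (t, u0) \<in> V \<longrightarrow> t0 \<le> t"
  shows "(t0, u0) \<notin> rel_interior V"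
proof
  assume "(t0, u0) \<in> rel_interior V"
  then obtain e where e: "e > 0" "ball (t0, u0) e \<inter> affine hull V \<subseteq> V"
    unfolding mem_rel_interior_ball by auto
  have "(1 + e/2) *\<^sub>R (t0, u0) + (- (e/2)) *\<^sub>R (t0 + 1, u0) \<in> affine hull V"
    by (rule mem_affine[OF affine_affine_hull]) (auto simp: hull_inc assms)
  moreover have "(1 + e/2) *\<^sub>R (t0, u0) + (- (e/2)) *\<^sub>R (t0 + 1, u0) = (t0 - e/2, u0)"
    by (simp add: algebra_simps)
  ultimately have "(t0 - e/2, u0) \<in> affine hull V" by simp
  moreover have "(t0 - e/2, u0) \<in> ball (t0, u0) e"
    using e by (simp add: dist_Pair_Pair dist_real_def)
  ultimately have "(t0 - e/2, u0) \<in> V" using e by auto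
  then show False using assms(3) e by force
qed

lemma lag_eq:
  fixes D :: "'a::euclidean_space set"
  assumes cD: "convex D" and xs: "xs \<in> D" "a \<bullet> xs = \<beta>"
    and xo: "xo \<in> rel_interior D" "a \<bullet> xo = \<beta>"
    and opt: "\<forall>x\<in>D. a \<bullet> x = \<beta> \<longrightarrow> c \<bullet> xs \<le> c \<bullet> x"
  shows "\<exists>\<nu>. \<forall>x\<in>D. c \<bullet> xs \<le> c \<bullet> x + \<nu> * (a \<bullet> x - \<beta>)"
proof -
  define V where "V = {(c \<bullet> x + r, a \<bullet> x) | x r. x \<in> D \<and> r \<ge> (0::real)}"
  have cV: "convex V"
    unfolding convex_def V_def
  proof (clarify)
    fix x x' and r r' u v :: real
    assume h: "x \<in> D" "0 \<le> r" "x' \<in> D" "0 \<le> r'" "0 \<le> u" "0 \<le> v" "u + v = 1"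
    show "\<exists>y s. u *\<^sub>R (c \<bullet> x + r, a \<bullet> x) + v *\<^sub>R (c \<bullet> x' + r', a \<bullet> x') = (c \<bullet> y + s, a \<bullet> y) \<and> y \<in> D \<and> 0 \<le> s"
      apply (rule exI[of _ "u *\<^sub>R x + v *\<^sub>R x'"], rule exI[of _ "u * r + v * r'"])
      using h cD by (auto simp: convex_def inner_add_right algebra_simps)
  qed
  have p0: "(c \<bullet> xs, \<beta>) \<in> V" unfolding V_def using xs by force
  have p1: "(c \<bullet> xs + 1, \<beta>) \<in> V" unfolding V_def using xs by force
  have "\<forall>t. (t, \<beta>) \<in> V \<longrightarrow> c \<bullet> xs \<le> t" unfolding V_def using opt by force
  then have "(c \<bullet> xs, \<beta>) \<notin> rel_interior V" using not_ri_lemma p0 p1 by blast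
  then obtain w where w: "w \<noteq> 0" "\<And>y. y \<in> V \<Longrightarrow> w \<bullet> (c \<bullet> xs, \<beta>) \<le> w \<bullet> y"
    using supporting_hyperplane_rel_boundary[OF cV p0] by metis
  obtain \<mu> \<nu>0 where wd: "w = (\<mu>, \<nu>0)" by (cases w)
  have ineq: "\<mu> * (c \<bullet> xs) + \<nu>0 * \<beta> \<le> \<mu> * (c \<bullet> x + r) + \<nu>0 * (a \<bullet> x)" if "x \<in> D" "r \<ge> 0" for x r
    using w(2)[of "(c \<bullet> x + r, a \<bullet> x)"] that unfolding V_def wd by auto
  have mu0: "\<mu> \<ge> 0" using ineq[OF xs(1), of 1] xs by (simp add: algebra_simps)
  show ?thesis
  proof (cases "\<mu> = 0")
    case True
    then have nz: "\<nu>0 \<noteq> 0" using w(1) wd by (auto simp: zero_prod_def)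
    have "\<forall>x\<in>D. (\<nu>0 *\<^sub>R a) \<bullet> xo \<le> (\<nu>0 *\<^sub>R a) \<bullet> x"
      using ineq[of _ 0] True xo(2) by auto
    then have "\<forall>x\<in>D. (\<nu>0 *\<^sub>R a) \<bullet> x = (\<nu>0 *\<^sub>R a) \<bullet> xo"
      using ri_min_const[OF xo(1)] by blast
    then have "\<forall>x\<in>D. a \<bullet> x = \<beta>" using nz xo(2) by auto
    then show ?thesis using opt by (intro exI[of _ 0]) auto
  next
    case False
    then have mp: "\<mu> > 0" using mu0 by simp
    show ?thesis
    proof (rule exI[of _ "\<nu>0 / \<mu>"], intro ballI)
      fix x assume "x \<in> D"
      from ineq[OF this, of 0] have "\<mu> * (c \<bullet> xs) \<le> \<mu> * (c \<bullet> x) + \<nu>0 * (a \<bullet> x - \<beta>)"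
        by (simp add: algebra_simps)
      then have "\<mu> * (c \<bullet> xs) \<le> \<mu> * (c \<bullet> x + \<nu>0 / \<mu> * (a \<bullet> x - \<beta>))"
        using mp by (simp add: algebra_simps)
      then show "c \<bullet> xs \<le> c \<bullet> x + \<nu>0 / \<mu> * (a \<bullet> x - \<beta>)"
        using mp by simp
    qed
  qed
qed

lemma lag_ineq:
  fixes D :: "'a::euclidean_space set"
  assumes cD: "convex D" and xs: "xs \<in> D" "a \<bullet> xs \<le> \<beta>"
    and x2: "x2 \<in> D" "a \<bullet> x2 < \<beta>"
    and opt: "\<forall>x\<in>D. a \<bullet> x \<le> \<beta> \<longrightarrow> c \<bullet> xs \<le> c \<bullet> x"
  shows "\<exists>l\<ge>0. \<forall>x\<in>D. c \<bullet> xs \<le> c \<bullet> x + l * (a \<bullet> x - \<beta>)"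
proof -
  define V where "V = {(c \<bullet> x + r, a \<bullet> x + s) | x r s. x \<in> D \<and> r \<ge> (0::real) \<and> s \<ge> (0::real)}"
  have cV: "convex V"
    unfolding convex_def V_def
  proof (clarify)
    fix x x' and r s r' s' u v :: real
    assume h: "x \<in> D" "0 \<le> r" "0 \<le> s" "x' \<in> D" "0 \<le> r'" "0 \<le> s'" "0 \<le> u" "0 \<le> v" "u + v = 1"
    show "\<exists>y rr ss. u *\<^sub>R (c \<bullet> x + r, a \<bullet> x + s) + v *\<^sub>R (c \<bullet> x' + r', a \<bullet> x' + s') = (c \<bullet> y + rr, a \<bullet> y + ss) \<and> y \<in> D \<and> 0 \<le> rr \<and> 0 \<le> ss"
    proof -
      have "u *\<^sub>R x + v *\<^sub>R x' \<in> D" using h cD unfolding convex_def by blast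
      moreover have "u *\<^sub>R (c \<bullet> x + r, a \<bullet> x + s) + v *\<^sub>R (c \<bullet> x' + r', a \<bullet> x' + s') =
        (c \<bullet> (u *\<^sub>R x + v *\<^sub>R x') + (u * r + v * r'), a \<bullet> (u *\<^sub>R x + v *\<^sub>R x') + (u * s + v * s'))"
        by (simp add: inner_add_right algebra_simps)
      moreover have "0 \<le> u * r + v * r'" "0 \<le> u * s + v * s'" using h by auto
      ultimately show ?thesis by blast
    qed
  qed
  have p0: "(c \<bullet> xs, \<beta>) \<in> V" unfolding V_def using xs
    by (intro CollectI exI[of _ xs] exI[of _ 0] exI[of _ "\<beta> - a \<bullet> xs"]) auto
  have p1: "(c \<bullet> xs + 1, \<beta>) \<in> V" unfolding V_def using xs
    by (intro CollectI exI[of _ xs] exI[of _ 1] exI[of _ "\<beta> - a \<bullet> xs"]) auto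
  have "\<forall>t. (t, \<beta>) \<in> V \<longrightarrow> c \<bullet> xs \<le> t"
  proof (intro allI impI)
    fix t assume "(t, \<beta>) \<in> V"
    then obtain x r s where "x \<in> D" "r \<ge> 0" "s \<ge> 0" "t = c \<bullet> x + r" "\<beta> = a \<bullet> x + s"
      unfolding V_def by auto
    then show "c \<bullet> xs \<le> t" using opt by force
  qed
  then have "(c \<bullet> xs, \<beta>) \<notin> rel_interior V" using not_ri_lemma p0 p1 by blast
  then obtain w where w: "w \<noteq> 0" "\<And>y. y \<in> V \<Longrightarrow> w \<bullet> (c \<bullet> xs, \<beta>) \<le> w \<bullet> y"
    using supporting_hyperplane_rel_boundary[OF cV p0] by metis
  obtain \<mu> \<nu>0 where wd: "w = (\<mu>, \<nu>0)" by (cases w)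
  have ineq: "\<mu> * (c \<bullet> xs) + \<nu>0 * \<beta> \<le> \<mu> * (c \<bullet> x + r) + \<nu>0 * (a \<bullet> x + s)"
    if "x \<in> D" "r \<ge> 0" "s \<ge> 0" for x r s
    using w(2)[of "(c \<bullet> x + r, a \<bullet> x + s)"] that unfolding V_def wd by auto
  have mu0: "\<mu> \<ge> 0" using ineq[OF xs(1), of 1 "\<beta> - a \<bullet> xs"] xs by (simp add: algebra_simps)
  have nu0: "\<nu>0 \<ge> 0" using ineq[OF xs(1), of 0 "\<beta> - a \<bullet> xs + 1"] xs by (simp add: algebra_simps)
  have "\<mu> \<noteq> 0"
  proof
    assume m: "\<mu> = 0"
    have "\<nu>0 * \<beta> \<le> \<nu>0 * (a \<bullet> x2)" using ineq[OF x2(1), of 0 0] m by simp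
    then have "\<nu>0 * (\<beta> - a \<bullet> x2) \<le> 0" by (simp add: algebra_simps)
    then have "\<nu>0 \<le> 0" using x2(2) by (simp add: mult_le_0_iff)
    then have "\<nu>0 = 0" using nu0 by simp
    then show False using m w(1) wd by (simp add: zero_prod_def)
  qed
  then have mp: "\<mu> > 0" using mu0 by simp
  show ?thesis
  proof (rule exI[of _ "\<nu>0 / \<mu>"], intro conjI ballI)
    show "\<nu>0 / \<mu> \<ge> 0" using mp nu0 by simp
    fix x assume "x \<in> D"
    from ineq[OF this, of 0 0] have "\<mu> * (c \<bullet> xs) \<le> \<mu> * (c \<bullet> x) + \<nu>0 * (a \<bullet> x - \<beta>)"
      by (simp add: algebra_simps)
    then have "\<mu> * (c \<bullet> xs) \<le> \<mu> * (c \<bullet> x + \<nu>0 / \<mu> * (a \<bullet> x - \<beta>))"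
      using mp by (simp add: algebra_simps)
    then show "c \<bullet> xs \<le> c \<bullet> x + \<nu>0 / \<mu> * (a \<bullet> x - \<beta>)"
      using mp by simp
  qed
qed


lemma lag_sum_eq:
  "(\<Sum>k\<in>R. l k * (a k \<bullet> x - \<beta> k)) = (\<Sum>k\<in>R. l k *\<^sub>R a k) \<bullet> x - (\<Sum>k\<in>R. l k * \<beta> k)"
  by (simp add: inner_sum_left sum_subtractf right_diff_distrib)

lemma ri_halfspace:
  fixes D :: "'a::euclidean_space set"
  assumes "convex D" "x2 \<in> rel_interior D" "a0 \<bullet> x2 < b0"
  shows "x2 \<in> rel_interior (D \<inter> {x. a0 \<bullet> x \<le> b0})"
proof (cases "a0 = 0")
  case True
  then have "{x. a0 \<bullet> x \<le> b0} = UNIV" using assms(3) by auto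
  then show ?thesis using assms by simp
next
  case False
  have "x2 \<in> rel_interior {x. a0 \<bullet> x \<le> b0}"
    using interior_subset_rel_interior[of "{x. a0 \<bullet> x \<le> b0}"] False assms(3) by auto
  then show ?thesis
    using convex_rel_interior_inter_two[OF assms(1) convex_halfspace_le] assms(2) by auto
qed

lemma cs_mult:
  fixes a :: "'i \<Rightarrow> 'a::euclidean_space" and \<beta> :: "'i \<Rightarrow> real"
  assumes "finite R"
  shows "\<forall>(D::'a set) c xs xo. convex D \<and> xo \<in> rel_interior D \<and> (\<forall>k\<in>R. a k \<bullet> xo \<le> \<beta> k) \<and>
           xs \<in> D \<and> (\<forall>k\<in>R. a k \<bullet> xs \<le> \<beta> k) \<and>
           (\<forall>x\<in>D. (\<forall>k\<in>R. a k \<bullet> x \<le> \<beta> k) \<longrightarrow> c \<bullet> xs \<le> c \<bullet> x) \<longrightarrow>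
         (\<exists>l. (\<forall>k\<in>R. l k \<ge> 0) \<and> (\<forall>x\<in>D. c \<bullet> xs \<le> c \<bullet> x + (\<Sum>k\<in>R. l k * (a k \<bullet> x - \<beta> k))))"
  using assms
proof (induction R rule: finite_induct)
  case empty
  then show ?case by auto
next
  case (insert k0 R')
  show ?case
  proof (intro allI impI, elim conjE)
    fix D :: "'a set" and c xs xo
    assume cD: "convex D" and xo: "xo \<in> rel_interior D" and xoR: "\<forall>k\<in>insert k0 R'. a k \<bullet> xo \<le> \<beta> k"
      and xs: "xs \<in> D" and xsR: "\<forall>k\<in>insert k0 R'. a k \<bullet> xs \<le> \<beta> k"
      and opt: "\<forall>x\<in>D. (\<forall>k\<in>insert k0 R'. a k \<bullet> x \<le> \<beta> k) \<longrightarrow> c \<bullet> xs \<le> c \<bullet> x"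
    define a0 where "a0 = a k0"
    define b0 where "b0 = \<beta> k0"
    have xoD: "xo \<in> D" using xo rel_interior_subset by auto
    have sum_ins: "(\<Sum>k\<in>insert k0 R'. l k * (a k \<bullet> x - \<beta> k)) =
        l k0 * (a0 \<bullet> x - b0) + (\<Sum>k\<in>R'. l k * (a k \<bullet> x - \<beta> k))" for l x
      using insert(1,2) by (simp add: a0_def b0_def)
    have nonpos: "(\<Sum>k\<in>R'. l k * (a k \<bullet> x - \<beta> k)) \<le> 0"
      if "\<forall>k\<in>R'. l k \<ge> 0" "\<forall>k\<in>R'. a k \<bullet> x \<le> \<beta> k" for l x
      using that by (intro sum_nonpos) (simp add: mult_nonneg_nonpos)
    show "\<exists>l. (\<forall>k\<in>insert k0 R'. 0 \<le> l k) \<and> (\<forall>x\<in>D. c \<bullet> xs \<le> c \<bullet> x + (\<Sum>k\<in>insert k0 R'. l k * (a k \<bullet> x - \<beta> k)))"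
    proof (cases "\<exists>x2\<in>rel_interior D. (\<forall>k\<in>R'. a k \<bullet> x2 \<le> \<beta> k) \<and> a0 \<bullet> x2 < b0")
      case True
      then obtain x2 where x2: "x2 \<in> rel_interior D" "\<forall>k\<in>R'. a k \<bullet> x2 \<le> \<beta> k" "a0 \<bullet> x2 < b0" by blast
      define D' where "D' = D \<inter> {x. a0 \<bullet> x \<le> b0}"
      have cD': "convex D'" unfolding D'_def using cD convex_halfspace_le by (rule convex_Int)
      have x2': "x2 \<in> rel_interior D'" unfolding D'_def using ri_halfspace[OF cD x2(1,3)] .
      have xs': "xs \<in> D'" unfolding D'_def using xs xsR by (auto simp: a0_def b0_def)
      have opt': "\<forall>x\<in>D'. (\<forall>k\<in>R'. a k \<bullet> x \<le> \<beta> k) \<longrightarrow> c \<bullet> xs \<le> c \<bullet> x"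
        using opt unfolding D'_def by (auto simp: a0_def b0_def)
      obtain l' where l': "\<forall>k\<in>R'. l' k \<ge> 0" "\<forall>x\<in>D'. c \<bullet> xs \<le> c \<bullet> x + (\<Sum>k\<in>R'. l' k * (a k \<bullet> x - \<beta> k))"
        using insert(3)[rule_format, of D' x2 xs c] cD' x2' x2(2) xs' xsR opt' by auto
      define c1 where "c1 = c + (\<Sum>k\<in>R'. l' k *\<^sub>R a k)"
      define d1 where "d1 = (\<Sum>k\<in>R'. l' k * \<beta> k)"
      have c1eq: "c \<bullet> x + (\<Sum>k\<in>R'. l' k * (a k \<bullet> x - \<beta> k)) = c1 \<bullet> x - d1" for x
        unfolding c1_def d1_def lag_sum_eq by (simp add: inner_add_left)
      have xs1: "c1 \<bullet> xs - d1 \<le> c \<bullet> xs" using nonpos[of l' xs] l'(1) xsR c1eq[of xs] by simp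
      have xs2: "c \<bullet> xs \<le> c1 \<bullet> xs - d1" using l'(2) xs' c1eq[of xs] by auto
      have "\<forall>x\<in>D. a0 \<bullet> x \<le> b0 \<longrightarrow> c1 \<bullet> xs \<le> c1 \<bullet> x"
        using l'(2) c1eq xs1 unfolding D'_def by force
      then obtain l0 where l0: "l0 \<ge> 0" "\<forall>x\<in>D. c1 \<bullet> xs \<le> c1 \<bullet> x + l0 * (a0 \<bullet> x - b0)"
        using lag_ineq[OF cD xs _ _ x2(3), of c1] xsR x2(1) rel_interior_subset
        by (auto simp: a0_def b0_def)
      show ?thesis
      proof (rule exI[of _ "l'(k0 := l0)"], intro conjI ballI)
        fix k assume "k \<in> insert k0 R'"
        then show "0 \<le> (l'(k0 := l0)) k" using l0 l' by auto
      next
        fix x assume xD: "x \<in> D"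
        have "(\<Sum>k\<in>R'. (l'(k0 := l0)) k * (a k \<bullet> x - \<beta> k)) = (\<Sum>k\<in>R'. l' k * (a k \<bullet> x - \<beta> k))"
          using insert(2) by (intro sum.cong) auto
        then have "c \<bullet> x + (\<Sum>k\<in>insert k0 R'. (l'(k0 := l0)) k * (a k \<bullet> x - \<beta> k)) =
            c1 \<bullet> x - d1 + l0 * (a0 \<bullet> x - b0)"
          using sum_ins c1eq by simp
        then show "c \<bullet> xs \<le> c \<bullet> x + (\<Sum>k\<in>insert k0 R'. (l'(k0 := l0)) k * (a k \<bullet> x - \<beta> k))"
          using xs2 l0(2) xD by fastforce
      qed
    next
      case False
      then have nb: "\<forall>x2\<in>rel_interior D. (\<forall>k\<in>R'. a k \<bullet> x2 \<le> \<beta> k) \<longrightarrow> b0 \<le> a0 \<bullet> x2"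
        by (auto simp: not_less)
      have xoeq: "a0 \<bullet> xo = b0" using nb xo xoR by (force simp: a0_def b0_def)
      have G: "b0 \<le> a0 \<bullet> x" if xD: "x \<in> D" and xR: "\<forall>k\<in>R'. a k \<bullet> x \<le> \<beta> k" for x
      proof -
        define m where "m = x - (1/2) *\<^sub>R (x - xo)"
        have m: "m \<in> rel_interior D" unfolding m_def
          by (rule rel_interior_convex_shrink[OF cD xo xD]) auto
        have mm: "m = (1/2) *\<^sub>R x + (1/2) *\<^sub>R xo" unfolding m_def by (simp add: algebra_simps flip: scaleR_add_left)
        have "\<forall>k\<in>R'. a k \<bullet> m \<le> \<beta> k"
        proof
          fix k assume "k \<in> R'"
          then have "a k \<bullet> x \<le> \<beta> k" "a k \<bullet> xo \<le> \<beta> k" using xR xoR by auto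
          then show "a k \<bullet> m \<le> \<beta> k" unfolding mm by (simp add: inner_add_right)
        qed
        then have "b0 \<le> a0 \<bullet> m" using nb m by auto
        then show ?thesis unfolding mm using xoeq by (simp add: inner_add_right)
      qed
      have xseq: "a0 \<bullet> xs = b0" using G[OF xs] xsR by (force simp: a0_def b0_def)
      define D' where "D' = D \<inter> {x. a0 \<bullet> x = b0}"
      have cD': "convex D'" unfolding D'_def using cD convex_hyperplane by (rule convex_Int)
      have "rel_interior D' = rel_interior D \<inter> {x. a0 \<bullet> x = b0}"
        unfolding D'_def using xo xoeq
        by (intro convex_affine_rel_interior_Int[OF cD affine_hyperplane]) auto
      then have xo': "xo \<in> rel_interior D'" using xo xoeq by auto
      have xs': "xs \<in> D'" unfolding D'_def using xs xseq by auto
      have opt': "\<forall>x\<in>D'. (\<forall>k\<in>R'. a k \<bullet> x \<le> \<beta> k) \<longrightarrow> c \<bullet> xs \<le> c \<bullet> x"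
        using opt unfolding D'_def by (auto simp: a0_def b0_def)
      obtain l' where l': "\<forall>k\<in>R'. l' k \<ge> 0" "\<forall>x\<in>D'. c \<bullet> xs \<le> c \<bullet> x + (\<Sum>k\<in>R'. l' k * (a k \<bullet> x - \<beta> k))"
        using insert(3)[rule_format, of D' xo xs c] cD' xo' xoR xs' xsR opt' by auto
      define c1 where "c1 = c + (\<Sum>k\<in>R'. l' k *\<^sub>R a k)"
      define d1 where "d1 = (\<Sum>k\<in>R'. l' k * \<beta> k)"
      have c1eq: "c \<bullet> x + (\<Sum>k\<in>R'. l' k * (a k \<bullet> x - \<beta> k)) = c1 \<bullet> x - d1" for x
        unfolding c1_def d1_def lag_sum_eq by (simp add: inner_add_left)
      have xs1: "c1 \<bullet> xs - d1 \<le> c \<bullet> xs" using nonpos[of l' xs] l'(1) xsR c1eq[of xs] by simp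
      have xs2: "c \<bullet> xs \<le> c1 \<bullet> xs - d1" using l'(2) xs' c1eq[of xs] by auto
      have "\<forall>x\<in>D. a0 \<bullet> x = b0 \<longrightarrow> c1 \<bullet> xs \<le> c1 \<bullet> x"
        using l'(2) c1eq xs1 unfolding D'_def by force
      then obtain \<nu> where nu: "\<forall>x\<in>D. c1 \<bullet> xs \<le> c1 \<bullet> x + \<nu> * (a0 \<bullet> x - b0)"
        using lag_eq[OF cD xs xseq xo xoeq] by blast
      have "\<forall>x\<in>D. (\<forall>k\<in>R'. a k \<bullet> x \<le> \<beta> k) \<longrightarrow> a0 \<bullet> xo \<le> a0 \<bullet> x"
        using G xoeq by auto
      then obtain l'' where l'': "\<forall>k\<in>R'. l'' k \<ge> 0" "\<forall>x\<in>D. a0 \<bullet> xo \<le> a0 \<bullet> x + (\<Sum>k\<in>R'. l'' k * (a k \<bullet> x - \<beta> k))"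
        using insert(3)[rule_format, of D xo xo a0] cD xo xoR xoD by auto
      show ?thesis
      proof (cases "\<nu> \<ge> 0")
        case True
        show ?thesis
        proof (rule exI[of _ "l'(k0 := \<nu>)"], intro conjI ballI)
          fix k assume "k \<in> insert k0 R'"
          then show "0 \<le> (l'(k0 := \<nu>)) k" using True l' by auto
        next
          fix x assume xD: "x \<in> D"
          have "(\<Sum>k\<in>R'. (l'(k0 := \<nu>)) k * (a k \<bullet> x - \<beta> k)) = (\<Sum>k\<in>R'. l' k * (a k \<bullet> x - \<beta> k))"
            using insert(2) by (intro sum.cong) auto
          then have "c \<bullet> x + (\<Sum>k\<in>insert k0 R'. (l'(k0 := \<nu>)) k * (a k \<bullet> x - \<beta> k)) =
              c1 \<bullet> x - d1 + \<nu> * (a0 \<bullet> x - b0)"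
            using sum_ins c1eq by simp
          then show "c \<bullet> xs \<le> c \<bullet> x + (\<Sum>k\<in>insert k0 R'. (l'(k0 := \<nu>)) k * (a k \<bullet> x - \<beta> k))"
            using xs2 nu xD by fastforce
        qed
      next
        case False
        define l where "l = (\<lambda>k. l' k + (- \<nu>) * l'' k)(k0 := 0)"
        show ?thesis
        proof (rule exI[of _ l], intro conjI ballI)
          fix k assume "k \<in> insert k0 R'"
          then show "0 \<le> l k"
          proof (cases "k = k0")
            case False
            then have "k \<in> R'" using \<open>k \<in> insert k0 R'\<close> by auto
            then have "0 \<le> l' k" "0 \<le> l'' k" using l' l'' by auto
            moreover have "0 \<le> (- \<nu>) * l'' k" using \<open>\<not> \<nu> \<ge> 0\<close> \<open>0 \<le> l'' k\<close> by (simp add: mult_nonpos_nonneg)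
            ultimately show ?thesis using False unfolding l_def by simp
          qed (simp add: l_def)
        next
          fix x assume xD: "x \<in> D"
          have "(\<Sum>k\<in>R'. l k * (a k \<bullet> x - \<beta> k)) =
              (\<Sum>k\<in>R'. l' k * (a k \<bullet> x - \<beta> k)) + (- \<nu>) * (\<Sum>k\<in>R'. l'' k * (a k \<bullet> x - \<beta> k))"
          proof -
            have "(\<Sum>k\<in>R'. l k * (a k \<bullet> x - \<beta> k)) =
                (\<Sum>k\<in>R'. l' k * (a k \<bullet> x - \<beta> k) + (- \<nu>) * (l'' k * (a k \<bullet> x - \<beta> k)))"
              using insert(2) unfolding l_def by (intro sum.cong) (auto simp: algebra_simps)
            then show ?thesis by (simp add: sum.distrib sum_distrib_left sum_subtractf sum_negf)
          qed
          then have e: "c \<bullet> x + (\<Sum>k\<in>insert k0 R'. l k * (a k \<bullet> x - \<beta> k)) =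
              c1 \<bullet> x - d1 + (- \<nu>) * (\<Sum>k\<in>R'. l'' k * (a k \<bullet> x - \<beta> k))"
            using sum_ins[of l x] c1eq[of x] unfolding l_def by simp
          have "\<nu> * (a0 \<bullet> x - b0) \<le> (- \<nu>) * (\<Sum>k\<in>R'. l'' k * (a k \<bullet> x - \<beta> k))"
          proof -
            have "b0 - a0 \<bullet> x \<le> (\<Sum>k\<in>R'. l'' k * (a k \<bullet> x - \<beta> k))" using l''(2) xD xoeq by force
            then have "(- \<nu>) * (b0 - a0 \<bullet> x) \<le> (- \<nu>) * (\<Sum>k\<in>R'. l'' k * (a k \<bullet> x - \<beta> k))"
              using False by (intro mult_left_mono) auto
            then show ?thesis by (simp add: algebra_simps)
          qed
          then show "c \<bullet> xs \<le> c \<bullet> x + (\<Sum>k\<in>insert k0 R'. l k * (a k \<bullet> x - \<beta> k))"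
            unfolding e using xs2 nu xD by fastforce
        qed
      qed
    qed
  qed
qed


lemma ereal_fin: "(v::ereal) \<noteq> -\<infinity> \<Longrightarrow> v < \<infinity> \<Longrightarrow> v = ereal (real_of_ereal v)"
  by (cases v) auto

lemma sum_UNIV_bool_prod:
  "(\<Sum>p\<in>(UNIV::('i::finite \<times> bool) set). f p) = (\<Sum>k\<in>UNIV. f (k, True) + f (k, False))"
proof -
  have "(\<Sum>p\<in>(UNIV::('i \<times> bool) set). f p) = (\<Sum>k\<in>UNIV. \<Sum>b\<in>UNIV. f (k, b))"
    by (simp add: UNIV_Times_UNIV[symmetric] sum.cartesian_product del: UNIV_Times_UNIV)
  also have "\<dots> = (\<Sum>k\<in>UNIV. f (k, True) + f (k, False))"
    by (simp add: UNIV_bool add.commute)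
  finally show ?thesis .
qed

lemma ri_epi:
  fixes \<phi> :: "'a::euclidean_space \<Rightarrow> ereal"
  assumes cvx: "convex_fun \<phi>" and nm: "\<forall>x. \<phi> x \<noteq> -\<infinity>"
    and x: "x \<in> rel_interior (edom \<phi>)" and t: "t > real_of_ereal (\<phi> x)"
  shows "(x, t) \<in> rel_interior (epigraph \<phi>)"
proof -
  have cS: "convex (epigraph \<phi>)" using cvx unfolding convex_fun_def .
  have xd: "\<phi> x < \<infinity>" using x rel_interior_subset unfolding edom_def by auto
  have fx: "\<phi> x = ereal (real_of_ereal (\<phi> x))" using ereal_fin nm xd by blast
  have dom: "{y. {z. (y, z) \<in> epigraph \<phi>} \<noteq> {}} = edom \<phi>"
  proof (intro set_eqI iffI)
    fix y assume "y \<in> {y. {z. (y, z) \<in> epigraph \<phi>} \<noteq> {}}"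
    then obtain z where "\<phi> y \<le> ereal z" unfolding epigraph_def by auto
    then show "y \<in> edom \<phi>" unfolding edom_def by (auto intro: le_less_trans)
  next
    fix y assume "y \<in> edom \<phi>"
    then have "\<phi> y = ereal (real_of_ereal (\<phi> y))" using ereal_fin nm unfolding edom_def by blast
    then have "(y, real_of_ereal (\<phi> y)) \<in> epigraph \<phi>" unfolding epigraph_def by simp
    then show "y \<in> {y. {z. (y, z) \<in> epigraph \<phi>} \<noteq> {}}" by auto
  qed
  have fib: "{z. (x, z) \<in> epigraph \<phi>} = {real_of_ereal (\<phi> x)..}"
    unfolding epigraph_def using fx by (auto, metis ereal_less_eq(3), metis ereal_less_eq(3))
  show ?thesis
    using rel_interior_projection[OF cS refl, of x t] dom fib x t by simp
qed

definition gfeas :: "('i \<Rightarrow> 'a::real_inner) \<Rightarrow> ('i \<Rightarrow> 'b::real_inner) \<Rightarrow> ('i \<Rightarrow> 'c::real_inner) \<Rightarrow> ('i \<Rightarrow> real) \<Rightarrow> ('i \<Rightarrow> bool) \<Rightarrow> 'a \<Rightarrow> 'b \<Rightarrow> 'c \<Rightarrow> bool" where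
  "gfeas a1 a2 a3 \<beta> eqc x1 x2 x3 \<longleftrightarrow>
     (\<forall>k. a1 k \<bullet> x1 + a2 k \<bullet> x2 + a3 k \<bullet> x3 \<le> \<beta> k \<and> (eqc k \<longrightarrow> a1 k \<bullet> x1 + a2 k \<bullet> x2 + a3 k \<bullet> x3 = \<beta> k))"

lemma poly_family:
  fixes \<phi> :: "'a::euclidean_space \<Rightarrow> ereal"
  obtains F ah bh where "finite F" "\<forall>h\<in>F. h = {x. ah h \<bullet> x \<le> bh h}"
    "(if polyhedral_fun \<phi> then UNIV else epigraph \<phi>) \<inter> \<Inter>F = epigraph \<phi>"
proof (cases "polyhedral_fun \<phi>")
  case True
  then obtain F where F: "finite F" "epigraph \<phi> = \<Inter>F" "\<forall>h\<in>F. \<exists>a b. a \<noteq> 0 \<and> h = {x. a \<bullet> x \<le> b}"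
    unfolding polyhedral_fun_def polyhedron_def by blast
  then obtain ah bh where "\<forall>h\<in>F. h = {x. ah h \<bullet> x \<le> bh h}" by metis
  then show ?thesis using that[of F ah bh] F True by simp
next
  case False
  then show ?thesis using that[of "{}"] by simp
qed


lemma slater_sub: "slater_dom h \<subseteq> edom h"
  unfolding slater_dom_def using rel_interior_subset by auto

lemma epi_mem: "\<phi> x \<noteq> -\<infinity> \<Longrightarrow> \<phi> x < \<infinity> \<Longrightarrow> real_of_ereal (\<phi> x) \<le> t \<Longrightarrow> (x, t) \<in> epigraph \<phi>"
  unfolding epigraph_def by (cases "\<phi> x") auto

lemma ri_E:
  fixes \<phi> :: "'a::euclidean_space \<Rightarrow> ereal"
  assumes "convex_fun \<phi>" "\<forall>x. \<phi> x \<noteq> -\<infinity>" "x \<in> slater_dom \<phi>"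
  shows "(x, real_of_ereal (\<phi> x) + 1) \<in> rel_interior (if polyhedral_fun \<phi> then UNIV else epigraph \<phi>)"
  using assms ri_epi[of \<phi> x "real_of_ereal (\<phi> x) + 1"] unfolding slater_dom_def by auto

lemma gen_mult:
  fixes \<phi>1 :: "'a::euclidean_space \<Rightarrow> ereal" and \<phi>2 :: "'b::euclidean_space \<Rightarrow> ereal"
    and cc :: "'c::euclidean_space" and a1 :: "'i::finite \<Rightarrow> 'a" and a2 :: "'i \<Rightarrow> 'b" and a3 :: "'i \<Rightarrow> 'c"
    and \<beta> :: "'i \<Rightarrow> real" and eqc :: "'i \<Rightarrow> bool"
  assumes n1: "\<forall>x. \<phi>1 x \<noteq> -\<infinity>" and c1: "convex_fun \<phi>1"
    and n2: "\<forall>x. \<phi>2 x \<noteq> -\<infinity>" and c2: "convex_fun \<phi>2"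
    and xs: "\<phi>1 x1s < \<infinity>" "\<phi>2 x2s < \<infinity>" "gfeas a1 a2 a3 \<beta> eqc x1s x2s x3s"
    and opt: "\<And>x1 x2 x3. gfeas a1 a2 a3 \<beta> eqc x1 x2 x3 \<Longrightarrow>
       \<phi>1 x1s + \<phi>2 x2s + ereal (cc \<bullet> x3s) \<le> \<phi>1 x1 + \<phi>2 x2 + ereal (cc \<bullet> x3)"
    and xo: "x1o \<in> slater_dom \<phi>1" "x2o \<in> slater_dom \<phi>2" "gfeas a1 a2 a3 \<beta> eqc x1o x2o x3o"
  shows "\<exists>l. (\<forall>k. \<not> eqc k \<longrightarrow> l k \<ge> 0) \<and> (\<forall>x1 x2 x3. \<phi>1 x1 < \<infinity> \<longrightarrow> \<phi>2 x2 < \<infinity> \<longrightarrow>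
     real_of_ereal (\<phi>1 x1s) + real_of_ereal (\<phi>2 x2s) + cc \<bullet> x3s \<le>
     real_of_ereal (\<phi>1 x1) + real_of_ereal (\<phi>2 x2) + cc \<bullet> x3 +
       (\<Sum>k\<in>UNIV. l k * (a1 k \<bullet> x1 + a2 k \<bullet> x2 + a3 k \<bullet> x3 - \<beta> k)))"
proof -
  obtain F1 ah1 bh1 where F1: "finite F1" "\<forall>h\<in>F1. h = {x. ah1 h \<bullet> x \<le> bh1 h}"
    "(if polyhedral_fun \<phi>1 then UNIV else epigraph \<phi>1) \<inter> \<Inter>F1 = epigraph \<phi>1"
    using poly_family by blast
  obtain F2 ah2 bh2 where F2: "finite F2" "\<forall>h\<in>F2. h = {x. ah2 h \<bullet> x \<le> bh2 h}"
    "(if polyhedral_fun \<phi>2 then UNIV else epigraph \<phi>2) \<inter> \<Inter>F2 = epigraph \<phi>2"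
    using poly_family by blast
  define E1 where "E1 = (if polyhedral_fun \<phi>1 then UNIV else epigraph \<phi>1)"
  define E2 where "E2 = (if polyhedral_fun \<phi>2 then UNIV else epigraph \<phi>2)"
  have cE1: "convex E1" unfolding E1_def using c1 convex_fun_def by auto
  have cE2: "convex E2" unfolding E2_def using c2 convex_fun_def by auto
  define D :: "((('a \<times> real) \<times> ('b \<times> real)) \<times> 'c) set" where "D = (E1 \<times> E2) \<times> UNIV"
  define R :: "('i \<times> bool + (('a \<times> real) set + ('b \<times> real) set)) set"
    where "R = range Inl \<union> Inr ` (Inl ` F1 \<union> Inr ` F2)"
  define RL :: "('i \<times> bool + (('a \<times> real) set + ('b \<times> real) set)) set" where "RL = range Inl"
  define RR :: "('i \<times> bool + (('a \<times> real) set + ('b \<times> real) set)) set" where "RR = Inr ` (Inl ` F1 \<union> Inr ` F2)"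
  have fR: "finite R" unfolding R_def using F1(1) F2(1) by auto
  define gv where "gv k = (((a1 k, 0::real), (a2 k, 0::real)), a3 k)" for k
  define A :: "('i \<times> bool + (('a \<times> real) set + ('b \<times> real) set)) \<Rightarrow> ((('a \<times> real) \<times> ('b \<times> real)) \<times> 'c)"
    where "A j = (case j of Inl (k, b) \<Rightarrow> if b then gv k else if eqc k then - gv k else 0
       | Inr (Inl h) \<Rightarrow> ((ah1 h, 0), 0) | Inr (Inr h) \<Rightarrow> ((0, ah2 h), 0))" for j
  define Bt :: "('i \<times> bool + (('a \<times> real) set + ('b \<times> real) set)) \<Rightarrow> real"
    where "Bt j = (case j of Inl (k, b) \<Rightarrow> if b then \<beta> k else if eqc k then - \<beta> k else 0
       | Inr (Inl h) \<Rightarrow> bh1 h | Inr (Inr h) \<Rightarrow> bh2 h)" for j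
  define C :: "((('a \<times> real) \<times> ('b \<times> real)) \<times> 'c)" where "C = (((0, 1), (0, 1)), cc)"
  define G where "G k x1 x2 x3 = a1 k \<bullet> x1 + a2 k \<bullet> x2 + a3 k \<bullet> x3 - \<beta> k" for k x1 x2 x3
  have AL: "A (Inl (k, b)) \<bullet> (((x1, s1), (x2, s2)), x3) - Bt (Inl (k, b)) =
      (if b then G k x1 x2 x3 else if eqc k then - G k x1 x2 x3 else 0)" for k b x1 s1 x2 s2 x3
    unfolding A_def Bt_def G_def gv_def by (auto simp: algebra_simps)
  have AR1: "A (Inr (Inl h)) \<bullet> (((x1, s1), (x2, s2)), x3) - Bt (Inr (Inl h)) = ah1 h \<bullet> (x1, s1) - bh1 h"
    for h x1 s1 x2 s2 x3 unfolding A_def Bt_def by simp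
  have AR2: "A (Inr (Inr h)) \<bullet> (((x1, s1), (x2, s2)), x3) - Bt (Inr (Inr h)) = ah2 h \<bullet> (x2, s2) - bh2 h"
    for h x1 s1 x2 s2 x3 unfolding A_def Bt_def by simp
  have Cv: "C \<bullet> (((x1, s1), (x2, s2)), x3) = s1 + s2 + cc \<bullet> x3" for x1 s1 x2 s2 x3
    unfolding C_def by simp
  have gfe: "gfeas a1 a2 a3 \<beta> eqc x1 x2 x3 \<longleftrightarrow> (\<forall>k. G k x1 x2 x3 \<le> 0 \<and> (eqc k \<longrightarrow> G k x1 x2 x3 = 0))"
    for x1 x2 x3 unfolding gfeas_def G_def by auto
  have cons: "(\<forall>j\<in>R. A j \<bullet> (((x1, s1), (x2, s2)), x3) \<le> Bt j) \<longleftrightarrow>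
      gfeas a1 a2 a3 \<beta> eqc x1 x2 x3 \<and> (x1, s1) \<in> \<Inter>F1 \<and> (x2, s2) \<in> \<Inter>F2" for x1 s1 x2 s2 x3
  proof -
    have "(\<forall>j\<in>R. A j \<bullet> (((x1, s1), (x2, s2)), x3) - Bt j \<le> 0) \<longleftrightarrow>
      (\<forall>k b. A (Inl (k, b)) \<bullet> (((x1, s1), (x2, s2)), x3) - Bt (Inl (k, b)) \<le> 0) \<and>
      (\<forall>h\<in>F1. A (Inr (Inl h)) \<bullet> (((x1, s1), (x2, s2)), x3) - Bt (Inr (Inl h)) \<le> 0) \<and>
      (\<forall>h\<in>F2. A (Inr (Inr h)) \<bullet> (((x1, s1), (x2, s2)), x3) - Bt (Inr (Inr h)) \<le> 0)"
      unfolding R_def by auto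
    also have "\<dots> \<longleftrightarrow> gfeas a1 a2 a3 \<beta> eqc x1 x2 x3 \<and> (x1, s1) \<in> \<Inter>F1 \<and> (x2, s2) \<in> \<Inter>F2"
    proof -
      have "(\<forall>k b. A (Inl (k, b)) \<bullet> (((x1, s1), (x2, s2)), x3) - Bt (Inl (k, b)) \<le> 0) \<longleftrightarrow>
          gfeas a1 a2 a3 \<beta> eqc x1 x2 x3"
        unfolding AL gfe
      proof (intro iffI allI)
        fix k assume H: "\<forall>k b. (if b then G k x1 x2 x3 else if eqc k then - G k x1 x2 x3 else 0) \<le> 0"
        from spec[OF spec[OF H, of k], of True] spec[OF spec[OF H, of k], of False]
        show "G k x1 x2 x3 \<le> 0 \<and> (eqc k \<longrightarrow> G k x1 x2 x3 = 0)" by (auto split: if_splits)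
      next
        fix k b assume H: "\<forall>k. G k x1 x2 x3 \<le> 0 \<and> (eqc k \<longrightarrow> G k x1 x2 x3 = 0)"
        then show "(if b then G k x1 x2 x3 else if eqc k then - G k x1 x2 x3 else 0) \<le> 0" by auto
      qed
      moreover have "(\<forall>h\<in>F1. A (Inr (Inl h)) \<bullet> (((x1, s1), (x2, s2)), x3) - Bt (Inr (Inl h)) \<le> 0) \<longleftrightarrow>
          (x1, s1) \<in> \<Inter>F1"
      proof -
        have "\<forall>h\<in>F1. ((x1, s1) \<in> h) = (ah1 h \<bullet> (x1, s1) \<le> bh1 h)" using F1(2) by (metis mem_Collect_eq)
        then show ?thesis unfolding AR1 by auto
      qed
      moreover have "(\<forall>h\<in>F2. A (Inr (Inr h)) \<bullet> (((x1, s1), (x2, s2)), x3) - Bt (Inr (Inr h)) \<le> 0) \<longleftrightarrow>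
          (x2, s2) \<in> \<Inter>F2"
      proof -
        have "\<forall>h\<in>F2. ((x2, s2) \<in> h) = (ah2 h \<bullet> (x2, s2) \<le> bh2 h)" using F2(2) by (metis mem_Collect_eq)
        then show ?thesis unfolding AR2 by auto
      qed
      ultimately show ?thesis by simp
    qed
    finally show ?thesis by simp
  qed
  define r1s where "r1s = real_of_ereal (\<phi>1 x1s)"
  define r2s where "r2s = real_of_ereal (\<phi>2 x2s)"
  define r1o where "r1o = real_of_ereal (\<phi>1 x1o)"
  define r2o where "r2o = real_of_ereal (\<phi>2 x2o)"
  have f1s: "\<phi>1 x1s = ereal r1s" unfolding r1s_def using ereal_fin n1 xs(1) by blast
  have f2s: "\<phi>2 x2s = ereal r2s" unfolding r2s_def using ereal_fin n2 xs(2) by blast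
  have x1od: "\<phi>1 x1o < \<infinity>" using xo(1) slater_sub unfolding edom_def by blast
  have x2od: "\<phi>2 x2o < \<infinity>" using xo(2) slater_sub unfolding edom_def by blast
  have epi1s: "(x1s, r1s) \<in> epigraph \<phi>1" using f1s unfolding epigraph_def by simp
  have epi2s: "(x2s, r2s) \<in> epigraph \<phi>2" using f2s unfolding epigraph_def by simp
  have epi1o: "(x1o, r1o + 1) \<in> epigraph \<phi>1" using epi_mem[of \<phi>1 x1o] n1 x1od unfolding r1o_def by simp
  have epi2o: "(x2o, r2o + 1) \<in> epigraph \<phi>2" using epi_mem[of \<phi>2 x2o] n2 x2od unfolding r2o_def by simp
  have riD: "rel_interior D = (rel_interior E1 \<times> rel_interior E2) \<times> UNIV"
    unfolding D_def by (simp add: rel_interior_Times cE1 cE2 convex_Times)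
  have xiO: "(((x1o, r1o + 1), (x2o, r2o + 1)), x3o) \<in> rel_interior D"
    unfolding riD using ri_E[OF c1 n1 xo(1)] ri_E[OF c2 n2 xo(2)]
    unfolding E1_def E2_def r1o_def r2o_def by simp
  have xiOc: "\<forall>j\<in>R. A j \<bullet> (((x1o, r1o + 1), (x2o, r2o + 1)), x3o) \<le> Bt j"
    unfolding cons using xo(3) epi1o epi2o F1(3) F2(3) by blast
  have xiS: "(((x1s, r1s), (x2s, r2s)), x3s) \<in> D"
    unfolding D_def E1_def E2_def using epi1s epi2s by auto
  have xiSc: "\<forall>j\<in>R. A j \<bullet> (((x1s, r1s), (x2s, r2s)), x3s) \<le> Bt j"
    unfolding cons using xs(3) epi1s epi2s F1(3) F2(3) by blast
  have cD: "convex D" unfolding D_def by (simp add: cE1 cE2 convex_Times)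
  have optD: "\<forall>\<xi>\<in>D. (\<forall>j\<in>R. A j \<bullet> \<xi> \<le> Bt j) \<longrightarrow> C \<bullet> (((x1s, r1s), (x2s, r2s)), x3s) \<le> C \<bullet> \<xi>"
  proof (intro ballI impI)
    fix \<xi> assume \<xi>D: "\<xi> \<in> D" and \<xi>c: "\<forall>j\<in>R. A j \<bullet> \<xi> \<le> Bt j"
    obtain x1 s1 x2 s2 x3 where \<xi>: "\<xi> = (((x1, s1), (x2, s2)), x3)" by (metis prod.collapse)
    have h: "gfeas a1 a2 a3 \<beta> eqc x1 x2 x3" "(x1, s1) \<in> \<Inter>F1" "(x2, s2) \<in> \<Inter>F2"
      using \<xi>c cons unfolding \<xi> by auto
    have "(x1, s1) \<in> epigraph \<phi>1" using h(2) \<xi>D F1(3) unfolding \<xi> D_def E1_def by auto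
    then have e1: "\<phi>1 x1 \<le> ereal s1" unfolding epigraph_def by simp
    have "(x2, s2) \<in> epigraph \<phi>2" using h(3) \<xi>D F2(3) unfolding \<xi> D_def E2_def by auto
    then have e2: "\<phi>2 x2 \<le> ereal s2" unfolding epigraph_def by simp
    have "ereal r1s + ereal r2s + ereal (cc \<bullet> x3s) \<le> \<phi>1 x1 + \<phi>2 x2 + ereal (cc \<bullet> x3)"
      using opt[OF h(1)] f1s f2s by simp
    also have "\<dots> \<le> ereal s1 + ereal s2 + ereal (cc \<bullet> x3)"
      using e1 e2 by (intro add_mono) auto
    finally have "r1s + r2s + cc \<bullet> x3s \<le> s1 + s2 + cc \<bullet> x3" by simp
    then show "C \<bullet> (((x1s, r1s), (x2s, r2s)), x3s) \<le> C \<bullet> \<xi>" unfolding \<xi> Cv .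
  qed
  obtain l' where l': "\<forall>j\<in>R. l' j \<ge> 0"
    "\<forall>\<xi>\<in>D. C \<bullet> (((x1s, r1s), (x2s, r2s)), x3s) \<le> C \<bullet> \<xi> + (\<Sum>j\<in>R. l' j * (A j \<bullet> \<xi> - Bt j))"
    using cs_mult[OF fR, where a=A and \<beta>=Bt, rule_format, where D=D and xo="(((x1o, r1o + 1), (x2o, r2o + 1)), x3o)"
        and xs="(((x1s, r1s), (x2s, r2s)), x3s)" and c=C] cD xiO xiOc xiS xiSc optD by blast
  define l where "l k = l' (Inl (k, True)) - (if eqc k then l' (Inl (k, False)) else 0)" for k
  show ?thesis
  proof (rule exI[of _ l], intro conjI allI impI)
    fix k assume "\<not> eqc k"
    then show "0 \<le> l k" unfolding l_def using l'(1) unfolding R_def by auto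
  next
    fix x1 x2 and x3 :: 'c assume d1: "\<phi>1 x1 < \<infinity>" and d2: "\<phi>2 x2 < \<infinity>"
    define s1 where "s1 = real_of_ereal (\<phi>1 x1)"
    define s2 where "s2 = real_of_ereal (\<phi>2 x2)"
    have ep1: "(x1, s1) \<in> epigraph \<phi>1" using epi_mem[of \<phi>1 x1] n1 d1 unfolding s1_def by simp
    have ep2: "(x2, s2) \<in> epigraph \<phi>2" using epi_mem[of \<phi>2 x2] n2 d2 unfolding s2_def by simp
    define \<xi> where "\<xi> = (((x1, s1), (x2, s2)), x3)"
    have \<xi>D: "\<xi> \<in> D" unfolding \<xi>_def D_def E1_def E2_def using ep1 ep2 by auto
    have disj: "RL \<inter> RR = {}" unfolding RL_def RR_def by auto
    have sR: "(\<Sum>j\<in>R. l' j * (A j \<bullet> \<xi> - Bt j)) =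
        (\<Sum>j\<in>RL. l' j * (A j \<bullet> \<xi> - Bt j)) + (\<Sum>j\<in>RR. l' j * (A j \<bullet> \<xi> - Bt j))"
      unfolding R_def RL_def[symmetric] RR_def[symmetric] using F1(1) F2(1) disj by (intro sum.union_disjoint) (auto simp: RL_def RR_def)
    have s2n: "(\<Sum>j\<in>RR. l' j * (A j \<bullet> \<xi> - Bt j)) \<le> 0"
    proof (intro sum_nonpos)
      fix j assume j: "j \<in> RR"
      then have lj: "l' j \<ge> 0" using l'(1) unfolding R_def RR_def by auto
      have "A j \<bullet> \<xi> - Bt j \<le> 0"
      proof -
        from j[unfolded RR_def] have "(\<exists>h\<in>F1. j = Inr (Inl h)) \<or> (\<exists>h\<in>F2. j = Inr (Inr h))" by auto
        then show ?thesis
        proof (elim disjE bexE)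
          fix h assume hh: "h \<in> F1" "j = Inr (Inl h)"
          have "(x1, s1) \<in> h" using ep1 F1(3) hh by auto
          then show ?thesis using hh F1(2) unfolding \<xi>_def by (auto simp: AR1)
        next
          fix h assume hh: "h \<in> F2" "j = Inr (Inr h)"
          have "(x2, s2) \<in> h" using ep2 F2(3) hh by auto
          then show ?thesis using hh F2(2) unfolding \<xi>_def by (auto simp: AR2)
        qed
      qed
      then show "l' j * (A j \<bullet> \<xi> - Bt j) \<le> 0" using lj by (simp add: mult_nonneg_nonpos)
    qed
    have s1e: "(\<Sum>j\<in>RL. l' j * (A j \<bullet> \<xi> - Bt j)) = (\<Sum>k\<in>UNIV. l k * G k x1 x2 x3)"
    proof -
      have "(\<Sum>j\<in>RL. l' j * (A j \<bullet> \<xi> - Bt j)) = (\<Sum>p\<in>UNIV. l' (Inl p) * (A (Inl p) \<bullet> \<xi> - Bt (Inl p)))"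
        unfolding RL_def by (subst sum.reindex) (auto simp: inj_on_def)
      also have "\<dots> = (\<Sum>k\<in>UNIV. l' (Inl (k, True)) * (A (Inl (k, True)) \<bullet> \<xi> - Bt (Inl (k, True))) +
          l' (Inl (k, False)) * (A (Inl (k, False)) \<bullet> \<xi> - Bt (Inl (k, False))))"
        by (rule sum_UNIV_bool_prod)
      also have "\<dots> = (\<Sum>k\<in>UNIV. l k * G k x1 x2 x3)"
        unfolding \<xi>_def AL l_def by (intro sum.cong) (auto simp: algebra_simps)
      finally show ?thesis .
    qed
    have "C \<bullet> (((x1s, r1s), (x2s, r2s)), x3s) \<le> C \<bullet> \<xi> + (\<Sum>j\<in>R. l' j * (A j \<bullet> \<xi> - Bt j))"
      using l'(2) \<xi>D by blast
    also have "\<dots> \<le> C \<bullet> \<xi> + (\<Sum>k\<in>UNIV. l k * G k x1 x2 x3)"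
      using sR s2n s1e by simp
    finally show "real_of_ereal (\<phi>1 x1s) + real_of_ereal (\<phi>2 x2s) + cc \<bullet> x3s \<le>
       real_of_ereal (\<phi>1 x1) + real_of_ereal (\<phi>2 x2) + cc \<bullet> x3 +
       (\<Sum>k\<in>UNIV. l k * (a1 k \<bullet> x1 + a2 k \<bullet> x2 + a3 k \<bullet> x3 - \<beta> k))"
      unfolding Cv \<xi>_def G_def r1s_def r2s_def s1_def s2_def by simp
  qed
qed


lemma lsc_nhds:
  assumes "lsc_fun h" "t < h x"
  shows "eventually (\<lambda>y. t < h y) (nhds x)"
proof -
  have "eventually (\<lambda>y. t < h y) (at x)" using assms unfolding lsc_fun_def by blast
  then have "eventually (\<lambda>y. y \<noteq> x \<longrightarrow> t < h y) (nhds x)"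
    unfolding eventually_at_filter by simp
  then show ?thesis by eventually_elim (use assms(2) in auto)
qed

lemma conj_ge: "ereal (q \<bullet> x) - h x \<le> conj h q"
  unfolding conj_def by (rule SUP_upper) simp

lemma conj_nminf:
  assumes "proper_fun h" shows "conj h q \<noteq> -\<infinity>"
proof -
  obtain x where x: "h x < \<infinity>" using assms unfolding proper_fun_def by blast
  have "h x \<noteq> -\<infinity>" using assms unfolding proper_fun_def by blast
  then obtain r where r: "h x = ereal r" using x by (cases "h x") auto
  have "ereal (q \<bullet> x - r) \<le> conj h q" using conj_ge[of q x h] r by simp
  then show ?thesis by auto
qed

lemma conj_subgrad_eq:
  assumes "v \<in> csubdiff h x"
  shows "conj h v = ereal (v \<bullet> x) - h x"
proof (rule antisym)
  have fin: "\<bar>h x\<bar> \<noteq> \<infinity>" and sg: "\<forall>u. h x + ereal (v \<bullet> (u - x)) \<le> h u"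
    using assms unfolding csubdiff_def by auto
  obtain r where r: "h x = ereal r" using fin by (cases "h x") auto
  show "conj h v \<le> ereal (v \<bullet> x) - h x"
    unfolding conj_def
  proof (rule SUP_least)
    fix u
    have s: "ereal (r + v \<bullet> (u - x)) \<le> h u" using sg r by simp
    show "ereal (v \<bullet> u) - h u \<le> ereal (v \<bullet> x) - h x"
    proof (cases "h u")
      case (real s')
      then show ?thesis using s r by (simp add: inner_diff_right)
    qed (use s r in auto)
  qed
  show "ereal (v \<bullet> x) - h x \<le> conj h v" by (rule conj_ge)
qed

lemma convex_fun_ineq:
  assumes "convex_fun h" "h x = ereal a" "h y = ereal b" "0 \<le> \<theta>" "\<theta> \<le> 1"
  shows "h ((1 - \<theta>) *\<^sub>R x + \<theta> *\<^sub>R y) \<le> ereal ((1 - \<theta>) * a + \<theta> * b)"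
proof -
  have "(x, a) \<in> epigraph h" "(y, b) \<in> epigraph h" using assms unfolding epigraph_def by auto
  then have "(1 - \<theta>) *\<^sub>R (x, a) + \<theta> *\<^sub>R (y, b) \<in> epigraph h"
    using assms(1,4,5) unfolding convex_fun_def by (intro convexD) auto
  then show ?thesis unfolding epigraph_def by simp
qed

lemma convex_conj:
  assumes "\<forall>x. h x \<noteq> -\<infinity>" shows "convex_fun (conj h)"
  unfolding convex_fun_def convex_def
proof (clarify)
  fix p s q t and u v :: real
  assume h1: "(p, s) \<in> epigraph (conj h)" "(q, t) \<in> epigraph (conj h)" "0 \<le> u" "0 \<le> v" "u + v = 1"
  have cp: "conj h p \<le> ereal s" and cq: "conj h q \<le> ereal t" using h1 unfolding epigraph_def by auto
  have "conj h (u *\<^sub>R p + v *\<^sub>R q) \<le> ereal (u * s + v * t)"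
    unfolding conj_def
  proof (rule SUP_least)
    fix x
    show "ereal ((u *\<^sub>R p + v *\<^sub>R q) \<bullet> x) - h x \<le> ereal (u * s + v * t)"
    proof (cases "h x")
      case (real r)
      have "ereal (p \<bullet> x) - h x \<le> ereal s" using conj_ge[of p x h] cp by (rule order_trans)
      then have a: "p \<bullet> x - r \<le> s" using real by simp
      have "ereal (q \<bullet> x) - h x \<le> ereal t" using conj_ge[of q x h] cq by (rule order_trans)
      then have b: "q \<bullet> x - r \<le> t" using real by simp
      have "u * (p \<bullet> x - r) + v * (q \<bullet> x - r) \<le> u * s + v * t"
        using a b h1(3,4) by (intro add_mono mult_left_mono) auto
      moreover have "r = r * u + r * v"
      proof -
        have "r = r * (u + v)" using h1(5) by simp
        then show ?thesis by (simp add: distrib_left)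
      qed
      ultimately show ?thesis using real h1(5) by (simp add: inner_add_left algebra_simps)
    next
      case PInf then show ?thesis by simp
    next
      case MInf then show ?thesis using assms by auto
    qed
  qed
  then show "u *\<^sub>R (p, s) + v *\<^sub>R (q, t) \<in> epigraph (conj h)" unfolding epigraph_def by simp
qed

lemma conj_lsc:
  assumes "proper_fun h" "ereal t < conj h q0"
  shows "eventually (\<lambda>q. ereal t < conj h q) (nhds q0)"
proof -
  obtain x where x: "ereal t < ereal (q0 \<bullet> x) - h x"
    using assms(2) unfolding conj_def less_SUP_iff by blast
  have "h x \<noteq> -\<infinity>" using assms unfolding proper_fun_def by blast
  moreover have "h x \<noteq> \<infinity>" using x by auto
  ultimately obtain r where r: "h x = ereal r" by (cases "h x") auto
  have lt: "t < q0 \<bullet> x - r" using x r by simp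
  have "((\<lambda>q. q \<bullet> x - r) \<longlongrightarrow> q0 \<bullet> x - r) (nhds q0)"
    by (intro tendsto_intros filterlim_ident)
  then have "eventually (\<lambda>q. t < q \<bullet> x - r) (nhds q0)" using lt by (rule order_tendstoD)
  then show ?thesis
  proof eventually_elim
    case (elim q)
    have "ereal (q \<bullet> x - r) \<le> conj h q" using conj_ge[of q x h] r by simp
    moreover have "ereal t < ereal (q \<bullet> x - r)" using elim by simp
    ultimately show ?case by (rule order.strict_trans2[rotated])
  qed
qed

lemma closed_epi:
  assumes "lsc_fun h" shows "closed (epigraph h)"
  unfolding closed_def
proof (subst open_subopen, intro ballI)
  fix p assume "p \<in> - epigraph h"
  then obtain x t where p: "p = (x, t)" and lt: "ereal t < h x"
    unfolding epigraph_def by (cases p) auto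
  obtain t' where t': "ereal t < ereal t'" "ereal t' < h x" using ereal_dense2[OF lt] by blast
  have "eventually (\<lambda>y. ereal t' < h y) (nhds x)" using lsc_nhds[OF assms t'(2)] .
  then obtain U where U: "open U" "x \<in> U" "\<forall>y\<in>U. ereal t' < h y" unfolding eventually_nhds by blast
  show "\<exists>T. open T \<and> p \<in> T \<and> T \<subseteq> - epigraph h"
  proof (intro exI conjI)
    show "open (U \<times> {..<t'})" using U(1) by (intro open_Times) auto
    show "p \<in> U \<times> {..<t'}" using p U(2) t'(1) by simp
    show "U \<times> {..<t'} \<subseteq> - epigraph h"
    proof
      fix q assume "q \<in> U \<times> {..<t'}"
      then obtain y s where q: "q = (y, s)" "y \<in> U" "s < t'" by auto
      have "ereal s < ereal t'" using q(3) by simp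
      moreover have "ereal t' < h y" using U(3) q(2) by blast
      ultimately have "ereal s < h y" by (rule order.strict_trans)
      then show "q \<in> - epigraph h" unfolding epigraph_def q by auto
    qed
  qed
qed


lemma sep_epi:
  fixes h :: "'a::euclidean_space \<Rightarrow> ereal"
  assumes cv: "convex_fun h" and ls: "lsc_fun h" and nm: "\<forall>x. h x \<noteq> -\<infinity>" and x0: "h x0 < \<infinity>"
    and nx: "ereal t < h x"
  shows "\<exists>w \<alpha> c. \<alpha> \<ge> 0 \<and> w \<bullet> x + \<alpha> * t < c \<and> (\<forall>u s. h u \<le> ereal s \<longrightarrow> c < w \<bullet> u + \<alpha> * s)"
proof -
  have ne: "(x, t) \<notin> epigraph h" using nx unfolding epigraph_def by auto
  obtain a c where ac: "a \<bullet> (x, t) < c" "\<forall>p\<in>epigraph h. c < a \<bullet> p"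
    using separating_hyperplane_closed_point[OF _ closed_epi[OF ls] ne] cv unfolding convex_fun_def by blast
  obtain w \<alpha> where a: "a = (w, \<alpha>)" by (cases a)
  have sep: "c < w \<bullet> u + \<alpha> * s" if "h u \<le> ereal s" for u s
    using ac(2) that unfolding a epigraph_def by auto
  obtain r0 where r0: "h x0 = ereal r0" using x0 nm by (cases "h x0") auto
  have "\<alpha> \<ge> 0"
  proof (rule ccontr)
    assume "\<not> \<alpha> \<ge> 0"
    then have an: "\<alpha> < 0" by simp
    define k where "k = (\<bar>w \<bullet> x0 + \<alpha> * r0 - c\<bar> + 1) / (- \<alpha>)"
    have k0: "k \<ge> 0" unfolding k_def using an by (intro divide_nonneg_pos) auto
    have "h x0 \<le> ereal (r0 + k)" using r0 k0 by simp
    then have "c < w \<bullet> x0 + \<alpha> * (r0 + k)" by (rule sep)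
    moreover have "\<alpha> * k = - (\<bar>w \<bullet> x0 + \<alpha> * r0 - c\<bar> + 1)" unfolding k_def using an by simp
    ultimately show False by (simp add: algebra_simps)
  qed
  then show ?thesis using ac(1) sep unfolding a by auto
qed

lemma minor_from:
  assumes "\<alpha> > 0" "\<forall>u s. h u \<le> ereal s \<longrightarrow> c < w \<bullet> u + \<alpha> * s" "\<forall>x. h x \<noteq> -\<infinity>"
  shows "\<forall>u. ereal ((- (1 / \<alpha>)) *\<^sub>R w \<bullet> u + c / \<alpha>) \<le> h u"
proof
  fix u
  have eq: "(- (1 / \<alpha>)) *\<^sub>R w \<bullet> u + c / \<alpha> = (c - w \<bullet> u) / \<alpha>"
    using assms(1) by (simp add: field_simps)
  show "ereal ((- (1 / \<alpha>)) *\<^sub>R w \<bullet> u + c / \<alpha>) \<le> h u"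
  proof (cases "h u")
    case (real r)
    then have "c < w \<bullet> u + \<alpha> * r" using assms(2) by auto
    then have "(c - w \<bullet> u) / \<alpha> \<le> r" using assms(1) by (simp add: field_simps)
    then show ?thesis using real eq by simp
  qed (use assms(3) in auto)
qed

lemma minorant:
  fixes h :: "'a::euclidean_space \<Rightarrow> ereal"
  assumes pr: "proper_fun h" and ls: "lsc_fun h" and cv: "convex_fun h" and nx: "ereal t < h x"
  shows "\<exists>a \<beta>. (\<forall>u. ereal (a \<bullet> u + \<beta>) \<le> h u) \<and> t < a \<bullet> x + \<beta>"
proof -
  have nm: "\<forall>x. h x \<noteq> -\<infinity>" using pr unfolding proper_fun_def by auto
  obtain x0 where x0: "h x0 < \<infinity>" using pr unfolding proper_fun_def by auto
  obtain r0 where r0: "h x0 = ereal r0" using x0 nm by (cases "h x0") auto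
  obtain w0 \<alpha>0 c0 where s0: "\<alpha>0 \<ge> 0" "w0 \<bullet> x0 + \<alpha>0 * (r0 - 1) < c0"
      "\<forall>u s. h u \<le> ereal s \<longrightarrow> c0 < w0 \<bullet> u + \<alpha>0 * s"
    using sep_epi[OF cv ls nm x0, of "r0 - 1" x0] r0 by auto
  have "c0 < w0 \<bullet> x0 + \<alpha>0 * r0" using s0(3) r0 by auto
  then have a0p: "\<alpha>0 > 0" using s0(1,2) by (cases "\<alpha>0 = 0") auto
  define a0 where "a0 = (- (1 / \<alpha>0)) *\<^sub>R w0"
  define \<beta>0 where "\<beta>0 = c0 / \<alpha>0"
  have m0: "\<forall>u. ereal (a0 \<bullet> u + \<beta>0) \<le> h u" unfolding a0_def \<beta>0_def using minor_from[OF a0p s0(3) nm] .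
  obtain w \<alpha> c where s: "\<alpha> \<ge> 0" "w \<bullet> x + \<alpha> * t < c" "\<forall>u s. h u \<le> ereal s \<longrightarrow> c < w \<bullet> u + \<alpha> * s"
    using sep_epi[OF cv ls nm x0 nx] by auto
  show ?thesis
  proof (cases "\<alpha> = 0")
    case False
    then have ap: "\<alpha> > 0" using s(1) by simp
    have "t < (- (1 / \<alpha>)) *\<^sub>R w \<bullet> x + c / \<alpha>"
      using s(2) ap by (simp add: field_simps)
    then show ?thesis using minor_from[OF ap s(3) nm] by blast
  next
    case True
    have wx: "w \<bullet> x < c" using s(2) True by simp
    have dom: "c < w \<bullet> u" if hu: "h u < \<infinity>" for u
    proof -
      obtain r where hr: "h u = ereal r" using hu nm by (cases "h u") auto
      have "c < w \<bullet> u + \<alpha> * r" using s(3) hr by simp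
      then show ?thesis using True by simp
    qed
    define k where "k = max 0 ((t - (a0 \<bullet> x + \<beta>0)) / (c - w \<bullet> x)) + 1"
    have k0: "k \<ge> 0" unfolding k_def by simp
    have kx: "t < a0 \<bullet> x + \<beta>0 + k * (c - w \<bullet> x)"
    proof -
      have "(t - (a0 \<bullet> x + \<beta>0)) / (c - w \<bullet> x) < k" unfolding k_def by simp
      then have "t - (a0 \<bullet> x + \<beta>0) < k * (c - w \<bullet> x)" using wx by (simp add: field_simps)
      then show ?thesis by simp
    qed
    show ?thesis
    proof (intro exI conjI allI)
      fix u
      show "ereal ((a0 - k *\<^sub>R w) \<bullet> u + (\<beta>0 + k * c)) \<le> h u"
      proof (cases "h u < \<infinity>")
        case True
        have "k * (c - w \<bullet> u) \<le> 0" using dom[OF True] k0 by (simp add: mult_nonneg_nonpos)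
        then have "(a0 - k *\<^sub>R w) \<bullet> u + (\<beta>0 + k * c) \<le> a0 \<bullet> u + \<beta>0"
          by (simp add: inner_diff_left algebra_simps)
        then show ?thesis using m0 by (meson ereal_less_eq(3) order_trans)
      qed simp
    next
      show "t < (a0 - k *\<^sub>R w) \<bullet> x + (\<beta>0 + k * c)"
        using kx by (simp add: inner_diff_left algebra_simps)
    qed
  qed
qed

lemma biconj_ge:
  fixes h :: "'a::euclidean_space \<Rightarrow> ereal"
  assumes pr: "proper_fun h" and ls: "lsc_fun h" and cv: "convex_fun h"
  shows "h x \<le> conj (conj h) x"
proof (rule ccontr)
  assume "\<not> h x \<le> conj (conj h) x"
  then have "conj (conj h) x < h x" by simp
  then obtain t where t: "conj (conj h) x < ereal t" "ereal t < h x" using ereal_dense2 by blast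
  obtain a \<beta> where m: "\<forall>u. ereal (a \<bullet> u + \<beta>) \<le> h u" "t < a \<bullet> x + \<beta>"
    using minorant[OF pr ls cv t(2)] by blast
  have nm: "\<forall>x. h x \<noteq> -\<infinity>" using pr unfolding proper_fun_def by auto
  have ca: "conj h a \<le> ereal (- \<beta>)"
    unfolding conj_def
  proof (rule SUP_least)
    fix u
    show "ereal (a \<bullet> u) - h u \<le> ereal (- \<beta>)"
    proof (cases "h u")
      case (real r)
      then show ?thesis using m(1)[rule_format, of u] by simp
    qed (use nm in auto)
  qed
  obtain ca where cae: "conj h a = ereal ca" using ca conj_nminf[OF pr, of a] by (cases "conj h a") auto
  have "ereal (x \<bullet> a) - ereal (- \<beta>) \<le> ereal (x \<bullet> a) - conj h a"
    using ca cae by simp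
  also have "\<dots> \<le> conj (conj h) x" by (rule conj_ge)
  finally have "ereal (a \<bullet> x + \<beta>) \<le> conj (conj h) x" by (simp add: inner_commute)
  then have "ereal t < conj (conj h) x" using m(2) by (meson ereal_less_eq(3) le_less_trans less_le_not_le order.strict_trans2)
  then show False using t(1) by simp
qed

lemma biconj_subgrad:
  fixes h :: "'a::euclidean_space \<Rightarrow> ereal"
  assumes pr: "proper_fun h" and ls: "lsc_fun h" and cv: "convex_fun h"
    and v: "v \<in> csubdiff (conj h) q"
  shows "h v = ereal (v \<bullet> q - real_of_ereal (conj h q))"
proof -
  have fin: "\<bar>conj h q\<bar> \<noteq> \<infinity>" using v unfolding csubdiff_def by auto
  then obtain cq where cq: "conj h q = ereal cq" by (cases "conj h q") auto
  have "conj (conj h) v = ereal (v \<bullet> q) - conj h q" using conj_subgrad_eq[OF v] .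
  then have up: "h v \<le> ereal (v \<bullet> q - cq)" using biconj_ge[OF pr ls cv, of v] cq by simp
  have lo: "ereal (q \<bullet> v) - h v \<le> ereal cq" using conj_ge[of q v h] cq by simp
  have nm: "h v \<noteq> -\<infinity>" using pr unfolding proper_fun_def by auto
  show ?thesis
  proof (cases "h v")
    case (real r)
    then show ?thesis using up lo cq by (simp add: inner_commute)
  qed (use up nm in auto)
qed


lemma mv_row: "(A *v x) $ i = A $ i \<bullet> x"
  by (simp add: matrix_vector_mult_def inner_vec_def mult.commute)

lemma tr_dot: "(transpose (A::real^'n^'m) *v y) \<bullet> v = y \<bullet> (A *v v)"
  by (metis dot_lmul_matrix transpose_matrix_vector)

lemma axis_dot: "axis i (1::real) \<bullet> u = u $ i"
  by (simp add: inner_axis')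

lemma sum_UNIV_Plus:
  "(\<Sum>k\<in>(UNIV::('a::finite + 'b::finite) set). f k) = (\<Sum>i\<in>UNIV. f (Inl i)) + (\<Sum>j\<in>UNIV. f (Inr j))"
  by (simp add: UNIV_Plus_UNIV[symmetric] sum.Plus del: UNIV_Plus_UNIV)

lemma sum_dot: "(\<Sum>i\<in>UNIV. c i * (v::real^'r) $ i) = (\<chi> i. c i) \<bullet> v"
  by (simp add: inner_vec_def)

lemma stab:
  fixes F :: "'a::topological_space \<Rightarrow> real^'r"
  assumes "(F \<longlongrightarrow> F x0) (nhds x0)"
  shows "eventually (\<lambda>x. \<forall>i. F x0 $ i \<noteq> 0 \<longrightarrow> F x $ i \<noteq> 0 \<and> (0 < F x $ i \<longleftrightarrow> 0 < F x0 $ i)) (nhds x0)"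
proof (rule eventually_all_finite)
  fix i
  have t: "((\<lambda>x. F x $ i) \<longlongrightarrow> F x0 $ i) (nhds x0)" using assms by (rule tendsto_vec_nth)
  show "eventually (\<lambda>x. F x0 $ i \<noteq> 0 \<longrightarrow> F x $ i \<noteq> 0 \<and> (0 < F x $ i \<longleftrightarrow> 0 < F x0 $ i)) (nhds x0)"
  proof (cases "F x0 $ i > 0")
    case True
    then have "eventually (\<lambda>x. 0 < F x $ i) (nhds x0)" using order_tendstoD(1)[OF t] by blast
    then show ?thesis by eventually_elim (use True in auto)
  next
    case False
    show ?thesis
    proof (cases "F x0 $ i < 0")
      case True
      then have "eventually (\<lambda>x. F x $ i < 0) (nhds x0)" using order_tendstoD(2)[OF t] by blast
      then show ?thesis by eventually_elim (use True in auto)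
    next
      case False
      then have "F x0 $ i = 0" using \<open>\<not> F x0 $ i > 0\<close> by simp
      then show ?thesis by simp
    qed
  qed
qed

definition act :: "bool \<Rightarrow> real^'r \<Rightarrow> 'r \<Rightarrow> bool" where
  "act pos v i = (if pos then v $ i > 0 else v $ i \<noteq> 0)"

lemma Phi_act: "Phi pos lam v = (\<Sum>i\<in>UNIV. if act pos v i then lam $ i else 0)"
  unfolding Phi_def act_def by (cases pos) auto

lemma phi_cmp:
  fixes u v lam :: "real^'r"
  assumes st: "\<forall>i. u $ i \<noteq> 0 \<longrightarrow> v $ i \<noteq> 0 \<and> (0 < v $ i \<longleftrightarrow> 0 < u $ i)"
    and lam: "\<forall>i. lam $ i > 0"
  shows "(\<forall>i. u $ i = 0 \<longrightarrow> \<not> act pos v i) \<Longrightarrow> Phi pos lam v = Phi pos lam u"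
    and "u $ i0 = 0 \<Longrightarrow> act pos v i0 \<Longrightarrow> Phi pos lam u + lam $ i0 \<le> Phi pos lam v"
proof -
  have same: "act pos v i = act pos u i" if "u $ i \<noteq> 0" for i
    using st that unfolding act_def by auto
  have nu: "\<not> act pos u i" if "u $ i = 0" for i using that unfolding act_def by auto
  {
    assume h: "\<forall>i. u $ i = 0 \<longrightarrow> \<not> act pos v i"
    show "Phi pos lam v = Phi pos lam u"
      unfolding Phi_act
    proof (intro sum.cong refl)
      fix i show "(if act pos v i then lam $ i else 0) = (if act pos u i then lam $ i else 0)"
        using same[of i] nu[of i] h by (cases "u $ i = 0") auto
    qed
  }
  {
    assume h: "u $ i0 = 0" "act pos v i0"
    have "Phi pos lam v - Phi pos lam u = (\<Sum>i\<in>UNIV. (if act pos v i then lam $ i else 0) - (if act pos u i then lam $ i else 0))"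
      unfolding Phi_act by (simp add: sum_subtractf)
    also have "\<dots> \<ge> (if act pos v i0 then lam $ i0 else 0) - (if act pos u i0 then lam $ i0 else 0)"
    proof (rule member_le_sum)
      fix i assume "i \<in> UNIV - {i0}"
      show "0 \<le> (if act pos v i then lam $ i else 0) - (if act pos u i then lam $ i else 0)"
        using same[of i] nu[of i] lam by (cases "u $ i = 0") (auto simp: less_imp_le)
    qed auto
    finally show "Phi pos lam u + lam $ i0 \<le> Phi pos lam v" using h nu[of i0] by simp
  }
qed

lemma Psi_Phi: "Psi pos mu z = ereal (Phi False mu z) + (if pos \<and> \<not> (\<forall>i. z $ i \<ge> 0) then \<infinity> else 0)"
  unfolding Psi_def Phi_def by simp

lemma min_pos:
  fixes lam :: "real^'r"
  assumes "\<forall>i. lam $ i > 0"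
  obtains m where "m > 0" "\<forall>i. m \<le> lam $ i"
proof -
  define m where "m = Min (range (\<lambda>i. lam $ i))"
  have "m > 0" unfolding m_def using assms by (subst Min_gr_iff) auto
  moreover have "\<forall>i. m \<le> lam $ i" unfolding m_def by (auto intro: Min_le)
  ultimately show ?thesis using that by blast
qed

lemma ereal_add_gt: "ereal p < X \<Longrightarrow> ereal q < Y \<Longrightarrow> ereal (p + q) < X + Y"
  by (cases X; cases Y) auto

lemma mv_tendsto: "((\<lambda>y. (A::real^'n^'m) *v y) \<longlongrightarrow> A *v x) (nhds x)"
  by (metis isCont_def tendsto_at_iff_tendsto_nhds matrix_vector_mult_linear_continuous_at)

lemma ev_comp: "(F \<longlongrightarrow> F x) (nhds x) \<Longrightarrow> eventually P (nhds (F x)) \<Longrightarrow> eventually (\<lambda>y. P (F y)) (nhds x)"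
  unfolding filterlim_iff by blast

lemma lsc_Theta:
  fixes f :: "real^'n \<Rightarrow> ereal" and g :: "real^'m \<Rightarrow> ereal"
  assumes "lsc_fun f" "lsc_fun g" "f x = ereal a" "g (A *v x) = ereal c" "e > 0"
  shows "eventually (\<lambda>y. ereal (a + c - e) < Theta f g A y) (nhds x)"
proof -
  have e1: "eventually (\<lambda>y. ereal (a - e/2) < f y) (nhds x)"
    using lsc_nhds[OF assms(1), of "ereal (a - e/2)" x] assms by simp
  have e2': "eventually (\<lambda>u. ereal (c - e/2) < g u) (nhds (A *v x))"
    using lsc_nhds[OF assms(2), of "ereal (c - e/2)" "A *v x"] assms by simp
  have e2: "eventually (\<lambda>y. ereal (c - e/2) < g (A *v y)) (nhds x)"
    using ev_comp[OF mv_tendsto e2'] .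
  from e1 e2 show ?thesis
  proof eventually_elim
    case (elim y)
    have "ereal ((a - e/2) + (c - e/2)) < f y + g (A *v y)" using ereal_add_gt[OF elim(1,2)] .
    then show ?case unfolding Theta_def by (simp add: algebra_simps)
  qed
qed


lemma all_sum: "(\<forall>k::'a+'b. P k) \<longleftrightarrow> (\<forall>i. P (Inl i)) \<and> (\<forall>j. P (Inr j))"
  by (metis sum.exhaust)

lemma add_fin: "(a::ereal) \<noteq> -\<infinity> \<Longrightarrow> b \<noteq> -\<infinity> \<Longrightarrow> a + b < \<infinity> \<Longrightarrow> a < \<infinity> \<and> b < \<infinity>"
  by (cases a; cases b) auto

lemma mv_comb: "(B::real^'n^'m) *v ((1 - t) *\<^sub>R x + t *\<^sub>R y) = (1 - t) *\<^sub>R (B *v x) + t *\<^sub>R (B *v y)"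
  by (simp add: vec_eq_iff mv_row inner_add_right)

lemma mv_diff: "(B::real^'n^'m) *v (x - y) = B *v x - B *v y"
  by (simp add: vec_eq_iff mv_row inner_diff_right)

lemma mv_neg: "(B::real^'n^'m) *v (- y) = - (B *v y)"
  by (simp add: vec_eq_iff mv_row)

lemma tend_lin: "((\<lambda>w. (M::real^'n^'m) *v F w) \<longlongrightarrow> M *v F x) (nhds x)" if "(F \<longlongrightarrow> F x) (nhds x)"
  using bounded_linear.tendsto[OF matrix_vector_mul_bounded_linear[of M] that] by simp

lemma vdot: "(xs::real^'n) \<bullet> (z v* (B::real^'n^'m)) = z \<bullet> (B *v xs)"
  by (metis dot_lmul_matrix inner_commute)

lemma Xi_ge:
  fixes f :: "real^'n \<Rightarrow> ereal" and g :: "real^'m \<Rightarrow> ereal"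
  assumes "f xs = ereal fx" "g (A *v xs) = ereal gx"
  shows "ereal (- (fx + gx) - z \<bullet> (B *v xs - b)) \<le> Xi f g A B b (y, z)"
proof -
  define q where "q = - (transpose A *v y) - transpose B *v z"
  have c1: "ereal (q \<bullet> xs - fx) \<le> conj f q" using conj_ge[of q xs f] assms(1) by simp
  have c2: "ereal (y \<bullet> (A *v xs) - gx) \<le> conj g y" using conj_ge[of y "A *v xs" g] assms(2) by simp
  have xe: "Xi f g A B b (y, z) = conj f q + conj g y + ereal (b \<bullet> z)"
    unfolding Xi_def q_def by simp
  have "ereal (q \<bullet> xs - fx) + ereal (y \<bullet> (A *v xs) - gx) + ereal (b \<bullet> z) \<le> Xi f g A B b (y, z)"
    unfolding xe using c1 c2 by (intro add_mono) auto
  moreover have "q \<bullet> xs - fx + (y \<bullet> (A *v xs) - gx) + b \<bullet> z = - (fx + gx) - z \<bullet> (B *v xs - b)"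
    unfolding q_def by (simp add: inner_diff_left inner_diff_right vdot dot_lmul_matrix inner_commute)
  ultimately show ?thesis by simp
qed

lemma Xi_lsc:
  fixes f :: "real^'n \<Rightarrow> ereal" and g :: "real^'m \<Rightarrow> ereal" and A :: "real^'n^'m" and B :: "real^'n^'r"
  assumes pf: "proper_fun f" and pg: "proper_fun g"
    and cf: "conj f (- (transpose A *v ys) - transpose B *v zs) = ereal cfv"
    and cg: "conj g ys = ereal cgv" and e: "e > 0"
  shows "eventually (\<lambda>w. ereal (cfv + cgv + b \<bullet> zs - e) < Xi f g A B b w) (nhds (ys, zs))"
proof -
  define L where "L w = - (transpose A *v fst w) - transpose B *v snd w" for w :: "(real^'m) \<times> (real^'r)"
  have tL: "(L \<longlongrightarrow> L (ys, zs)) (nhds (ys, zs))"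
  proof -
    have "((\<lambda>w. transpose A *v fst w) \<longlongrightarrow> transpose A *v fst (ys, zs)) (nhds (ys, zs))"
      by (rule tend_lin) (intro tendsto_intros filterlim_ident)
    moreover have "((\<lambda>w. transpose B *v snd w) \<longlongrightarrow> transpose B *v snd (ys, zs)) (nhds (ys, zs))"
      by (rule tend_lin) (intro tendsto_intros filterlim_ident)
    ultimately show ?thesis unfolding L_def by (intro tendsto_intros) auto
  qed
  have e1': "eventually (\<lambda>q. ereal (cfv - e/3) < conj f q) (nhds (L (ys, zs)))"
    using conj_lsc[OF pf, of "cfv - e/3"] cf e unfolding L_def by simp
  have e1: "eventually (\<lambda>w. ereal (cfv - e/3) < conj f (L w)) (nhds (ys, zs))"
    using ev_comp[OF tL e1'] .
  have tf: "(fst \<longlongrightarrow> fst (ys, zs)) (nhds (ys, zs))" by (intro tendsto_intros filterlim_ident)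
  have e2': "eventually (\<lambda>y. ereal (cgv - e/3) < conj g y) (nhds (fst (ys, zs)))"
    using conj_lsc[OF pg, of "cgv - e/3"] cg e by simp
  have e2: "eventually (\<lambda>w. ereal (cgv - e/3) < conj g (fst w)) (nhds (ys, zs))"
    using ev_comp[OF tf e2'] .
  have tb: "((\<lambda>w. b \<bullet> snd w) \<longlongrightarrow> b \<bullet> snd (ys, zs)) (nhds (ys, zs))"
    by (intro tendsto_intros filterlim_ident)
  have e3: "eventually (\<lambda>w. b \<bullet> zs - e/3 < b \<bullet> snd w) (nhds (ys, zs))"
    using order_tendstoD(1)[OF tb, of "b \<bullet> zs - e/3"] e by simp
  from e1 e2 e3 show ?thesis
  proof eventually_elim
    case (elim w)
    have s12: "ereal ((cfv - e/3) + (cgv - e/3)) < conj f (L w) + conj g (fst w)"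
      by (rule ereal_add_gt[OF elim(1,2)])
    have "ereal ((cfv - e/3) + (cgv - e/3) + (b \<bullet> zs - e/3)) < conj f (L w) + conj g (fst w) + ereal (b \<bullet> snd w)"
      using ereal_add_gt[OF s12, of "b \<bullet> zs - e/3" "ereal (b \<bullet> snd w)"] elim(3) by simp
    then show ?case unfolding Xi_def L_def by (cases w) (simp add: algebra_simps)
  qed
qed


lemma ereal_cancel_le: "a + ereal c \<le> b + ereal c \<Longrightarrow> (a::ereal) \<le> b"
  by (cases a; cases b) auto

lemma part1:
  fixes f :: "real^'n \<Rightarrow> ereal" and g :: "real^'m \<Rightarrow> ereal"
    and A :: "real^'n^'m" and B :: "real^'n^'r" and b :: "real^'r"
    and lam mu :: "real^'r" and pos :: bool
  assumes f: "proper_fun f" "lsc_fun f" "convex_fun f"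
    and g: "proper_fun g" "lsc_fun g" "convex_fun g"
    and lam: "\<forall>i. lam $ i > 0" and mu: "\<forall>i. mu $ i > 0"
    and lm: "local_min (FP pos f g A B b lam) xs" and fin: "FP pos f g A B b lam xs < \<infinity>"
    and sl: "x0 \<in> slater_dom f" "A *v x0 \<in> slater_dom g"
      "\<forall>i. (B *v xs - b) $ i = 0 \<longrightarrow> (if pos then (B *v x0 - b) $ i \<le> 0 else (B *v x0 - b) $ i = 0)"
  shows "\<exists>ys zs. ys \<in> csubdiff g (A *v xs) \<and> zs \<in> subdiff_Phi pos (B *v xs - b) \<and>
             local_min (GD pos f g A B b mu) (ys, zs) \<and>
             Theta f g A xs = - Xi f g A B b (ys, zs)"
proof -
  have nf: "\<forall>x. f x \<noteq> -\<infinity>" using f(1) unfolding proper_fun_def by auto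
  have ng: "\<forall>x. g x \<noteq> -\<infinity>" using g(1) unfolding proper_fun_def by auto
  define u0 where "u0 = B *v xs - b"
  have "Theta f g A xs < \<infinity>" using fin unfolding FP_def by (cases "Theta f g A xs") auto
  then have "f xs < \<infinity> \<and> g (A *v xs) < \<infinity>" using add_fin nf ng unfolding Theta_def by blast
  then obtain fx gx where fx: "f xs = ereal fx" and gx: "g (A *v xs) = ereal gx"
    using ereal_fin nf ng by metis
  define feasC where "feasC x \<longleftrightarrow> (\<forall>i. u0 $ i = 0 \<longrightarrow> \<not> act pos (B *v x - b) i)" for x
  have feasC_iff: "feasC x \<longleftrightarrow> (\<forall>i. u0 $ i = 0 \<longrightarrow> (if pos then (B *v x - b) $ i \<le> 0 else (B *v x - b) $ i = 0))" for x
    unfolding feasC_def act_def by auto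
  obtain e1 where e1: "e1 > 0" "\<forall>x. dist x xs < e1 \<longrightarrow> FP pos f g A B b lam xs \<le> FP pos f g A B b lam x"
    using lm unfolding local_min_def by blast
  have tB: "((\<lambda>x. B *v x - b) \<longlongrightarrow> B *v xs - b) (nhds xs)" by (intro tendsto_intros mv_tendsto)
  have "eventually (\<lambda>x. \<forall>i. u0 $ i \<noteq> 0 \<longrightarrow> (B *v x - b) $ i \<noteq> 0 \<and> (0 < (B *v x - b) $ i \<longleftrightarrow> 0 < u0 $ i)) (nhds xs)"
    using stab[OF tB] unfolding u0_def .
  then obtain e2 where e2: "e2 > 0" "\<forall>x. dist x xs < e2 \<longrightarrow> (\<forall>i. u0 $ i \<noteq> 0 \<longrightarrow> (B *v x - b) $ i \<noteq> 0 \<and> (0 < (B *v x - b) $ i \<longleftrightarrow> 0 < u0 $ i))"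
    unfolding eventually_nhds_metric by blast
  define e where "e = min e1 e2"
  have ep: "e > 0" using e1 e2 unfolding e_def by simp
  have LOC: "Theta f g A xs \<le> Theta f g A x" if "dist x xs < e" "feasC x" for x
  proof -
    have "FP pos f g A B b lam xs \<le> FP pos f g A B b lam x" using e1 that(1) unfolding e_def by auto
    moreover have "Phi pos lam (B *v x - b) = Phi pos lam u0"
      using phi_cmp(1)[of u0 "B *v x - b" lam pos] e2 that lam unfolding e_def feasC_def by auto
    ultimately have "Theta f g A xs + ereal (Phi pos lam u0) \<le> Theta f g A x + ereal (Phi pos lam u0)"
      unfolding FP_def u0_def by simp
    then show ?thesis by (rule ereal_cancel_le)
  qed
  have GLOB: "Theta f g A xs \<le> Theta f g A x" if fc: "feasC x" for x
  proof (cases "Theta f g A x < \<infinity>")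
    case False then show ?thesis by simp
  next
    case True
    then have "f x < \<infinity> \<and> g (A *v x) < \<infinity>" using add_fin nf ng unfolding Theta_def by blast
    then obtain a c where a: "f x = ereal a" and c: "g (A *v x) = ereal c" using ereal_fin nf ng by metis
    have np: "norm (x - xs) + 1 > 0" by (metis add_pos_nonneg norm_ge_zero zero_less_one add.commute)
    define \<theta> where "\<theta> = min 1 (e / (2 * (norm (x - xs) + 1)))"
    have th0: "\<theta> > 0" using ep np unfolding \<theta>_def by simp
    have th1: "\<theta> \<le> 1" unfolding \<theta>_def by simp
    define xt where "xt = (1 - \<theta>) *\<^sub>R xs + \<theta> *\<^sub>R x"
    have dxt: "dist xt xs < e"
    proof -
      have "xt - xs = \<theta> *\<^sub>R (x - xs)" unfolding xt_def by (simp add: algebra_simps)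
      then have "dist xt xs = \<theta> * norm (x - xs)" using th0 by (simp add: dist_norm)
      also have "\<dots> \<le> e / (2 * (norm (x - xs) + 1)) * norm (x - xs)"
        unfolding \<theta>_def by (intro mult_right_mono) auto
      also have "\<dots> < e"
      proof -
        have "e / (2 * (norm (x - xs) + 1)) * norm (x - xs) \<le> e / (2 * (norm (x - xs) + 1)) * (norm (x - xs) + 1)"
          using ep np by (intro mult_left_mono) auto
        also have "\<dots> = e / 2" using np by (simp add: field_simps)
        finally have "e / (2 * (norm (x - xs) + 1)) * norm (x - xs) \<le> e / 2" .
        then show ?thesis using ep by linarith
      qed
      finally show ?thesis .
    qed
    have Bxt: "B *v xt - b = (1 - \<theta>) *\<^sub>R u0 + \<theta> *\<^sub>R (B *v x - b)"
      unfolding xt_def u0_def mv_comb by (simp add: algebra_simps)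
    have fxt: "feasC xt"
      unfolding feasC_def
    proof (intro allI impI)
      fix i assume "u0 $ i = 0"
      then have "(B *v xt - b) $ i = \<theta> * (B *v x - b) $ i" unfolding Bxt by simp
      moreover have "\<not> act pos (B *v x - b) i" using fc \<open>u0 $ i = 0\<close> unfolding feasC_def by auto
      ultimately show "\<not> act pos (B *v xt - b) i" using th0 unfolding act_def
        by (auto simp: zero_less_mult_iff)
    qed
    have l: "Theta f g A xs \<le> Theta f g A xt" using LOC dxt fxt by blast
    have cf: "f xt \<le> ereal ((1 - \<theta>) * fx + \<theta> * a)"
      unfolding xt_def using convex_fun_ineq[OF f(3) fx a] th0 th1 by simp
    have Axt: "A *v xt = (1 - \<theta>) *\<^sub>R (A *v xs) + \<theta> *\<^sub>R (A *v x)" unfolding xt_def mv_comb ..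
    have cg: "g (A *v xt) \<le> ereal ((1 - \<theta>) * gx + \<theta> * c)"
      unfolding Axt using convex_fun_ineq[OF g(3) gx c] th0 th1 by simp
    have "ereal (fx + gx) \<le> ereal ((1 - \<theta>) * fx + \<theta> * a) + ereal ((1 - \<theta>) * gx + \<theta> * c)"
    proof -
      have "Theta f g A xt \<le> ereal ((1 - \<theta>) * fx + \<theta> * a) + ereal ((1 - \<theta>) * gx + \<theta> * c)"
        unfolding Theta_def using cf cg by (rule add_mono)
      moreover have "Theta f g A xs = ereal (fx + gx)" unfolding Theta_def using fx gx by simp
      ultimately have "ereal (fx + gx) \<le> ereal ((1 - \<theta>) * fx + \<theta> * a) + ereal ((1 - \<theta>) * gx + \<theta> * c)"
        using l by (metis order_trans)
      then show ?thesis by simp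
    qed
    then have "fx + gx \<le> (1 - \<theta>) * (fx + gx) + \<theta> * (a + c)" by (simp add: algebra_simps)
    then have "\<theta> * (fx + gx) \<le> \<theta> * (a + c)" by (simp add: algebra_simps)
    then have "fx + gx \<le> a + c" using th0 by simp
    then show ?thesis unfolding Theta_def using fx gx a c by simp
  qed
  define a1 :: "'m + 'r \<Rightarrow> real^'n" where
    "a1 k = (case k of Inl i \<Rightarrow> - (A $ i) | Inr i \<Rightarrow> if u0 $ i = 0 then B $ i else 0)" for k
  define a2 :: "'m + 'r \<Rightarrow> real^'m" where "a2 k = (case k of Inl i \<Rightarrow> axis i 1 | Inr i \<Rightarrow> 0)" for k
  define a3 :: "'m + 'r \<Rightarrow> real" where "a3 k = 0" for k
  define bt :: "'m + 'r \<Rightarrow> real" where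
    "bt k = (case k of Inl i \<Rightarrow> 0 | Inr i \<Rightarrow> if u0 $ i = 0 then b $ i else 0)" for k
  define eqc :: "'m + 'r \<Rightarrow> bool" where "eqc k = (case k of Inl i \<Rightarrow> True | Inr i \<Rightarrow> \<not> pos)" for k
  have gf: "gfeas a1 a2 a3 bt eqc x u z \<longleftrightarrow> u = A *v x \<and> feasC x" for x u z
  proof -
    have "gfeas a1 a2 a3 bt eqc x u z \<longleftrightarrow> (\<forall>i. u $ i = (A *v x) $ i) \<and>
       (\<forall>i. u0 $ i = 0 \<longrightarrow> (B *v x - b) $ i \<le> 0 \<and> (\<not> pos \<longrightarrow> (B *v x - b) $ i = 0))"
      unfolding gfeas_def all_sum a1_def a2_def a3_def bt_def eqc_def
      by (auto simp: axis_dot mv_row)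
    also have "\<dots> \<longleftrightarrow> u = A *v x \<and> feasC x"
      unfolding feasC_iff vec_eq_iff by (auto split: if_splits)
    finally show ?thesis .
  qed
  have xsfe: "gfeas a1 a2 a3 bt eqc xs (A *v xs) 0"
    unfolding gf feasC_iff u0_def by simp
  have x0fe: "gfeas a1 a2 a3 bt eqc x0 (A *v x0) 0"
    unfolding gf feasC_iff using sl(3) unfolding u0_def by simp
  have optg: "f xs + g (A *v xs) + ereal (0 * 0) \<le> f x + g u + ereal (0 * z)"
    if "gfeas a1 a2 a3 bt eqc x u z" for x u z
    using GLOB[of x] that unfolding gf Theta_def by auto
  obtain l where l: "\<forall>k. \<not> eqc k \<longrightarrow> l k \<ge> 0"
    and Lg: "\<forall>x u (z::real). f x < \<infinity> \<longrightarrow> g u < \<infinity> \<longrightarrow>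
      real_of_ereal (f xs) + real_of_ereal (g (A *v xs)) + 0 * 0 \<le>
      real_of_ereal (f x) + real_of_ereal (g u) + 0 * z +
        (\<Sum>k\<in>UNIV. l k * (a1 k \<bullet> x + a2 k \<bullet> u + a3 k \<bullet> z - bt k))"
    using gen_mult[of f g xs "A *v xs" a1 a2 a3 bt eqc "0::real" "0::real" x0 "A *v x0" "0::real"]
      nf ng f(3) g(3) fx gx xsfe optg sl(1,2) x0fe by auto
  define yv :: "real^'m" where "yv = (\<chi> i. l (Inl i))"
  define zv :: "real^'r" where "zv = (\<chi> i. if u0 $ i = 0 then l (Inr i) else 0)"
  have sumeq: "(\<Sum>k\<in>UNIV. l k * (a1 k \<bullet> x + a2 k \<bullet> u + a3 k \<bullet> z - bt k)) =
      yv \<bullet> (u - A *v x) + zv \<bullet> (B *v x - b)" for x u and z :: real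
  proof -
    have "(\<Sum>k\<in>UNIV. l k * (a1 k \<bullet> x + a2 k \<bullet> u + a3 k \<bullet> z - bt k)) =
      (\<Sum>i\<in>UNIV. l (Inl i) * (u $ i - (A *v x) $ i)) +
      (\<Sum>i\<in>UNIV. (if u0 $ i = 0 then l (Inr i) else 0) * ((B *v x - b) $ i))"
      unfolding sum_UNIV_Plus a1_def a2_def a3_def bt_def
      by (intro arg_cong2[where f="(+)"] sum.cong) (auto simp: axis_dot mv_row)
    then show ?thesis unfolding yv_def zv_def inner_vec_def by simp
  qed
  have Lag: "fx + gx \<le> real_of_ereal (f x) + real_of_ereal (g u) + yv \<bullet> (u - A *v x) + zv \<bullet> (B *v x - b)"
    if "f x < \<infinity>" "g u < \<infinity>" for x u
    using Lg[rule_format, OF that, of 0] sumeq[of x u 0] fx gx by simp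
  have zu0: "zv \<bullet> u0 = 0" unfolding zv_def inner_vec_def by (intro sum.neutral) auto
  define ys where "ys = - yv"
  define zs where "zs = zv"
  define p where "p = - (transpose A *v ys) - transpose B *v zs"
  have sg: "ys \<in> csubdiff g (A *v xs)"
    unfolding csubdiff_def
  proof (intro CollectI conjI allI)
    show "\<bar>g (A *v xs)\<bar> \<noteq> \<infinity>" using gx by simp
    fix u show "g (A *v xs) + ereal (ys \<bullet> (u - A *v xs)) \<le> g u"
    proof (cases "g u < \<infinity>")
      case True
      then obtain r where r: "g u = ereal r" using ng ereal_fin by metis
      have "fx + gx \<le> fx + r + yv \<bullet> (u - A *v xs) + zv \<bullet> u0"
        using Lag[of xs u] True fx r unfolding u0_def by simp
      then show ?thesis using gx r zu0 unfolding ys_def by simp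
    qed simp
  qed
  have sf: "p \<in> csubdiff f xs"
    unfolding csubdiff_def
  proof (intro CollectI conjI allI)
    show "\<bar>f xs\<bar> \<noteq> \<infinity>" using fx by simp
    fix x show "f xs + ereal (p \<bullet> (x - xs)) \<le> f x"
    proof (cases "f x < \<infinity>")
      case True
      then obtain a where a: "f x = ereal a" using nf ereal_fin by metis
      have "fx + gx \<le> a + gx + yv \<bullet> (A *v xs - A *v x) + zv \<bullet> (B *v x - b)"
        using Lag[of x "A *v xs"] True a gx by simp
      moreover have "zv \<bullet> (B *v x - b) = zv \<bullet> (B *v (x - xs))"
      proof -
        have "B *v x - b = B *v (x - xs) + u0" unfolding u0_def mv_diff by simp
        then show ?thesis using zu0 by (simp add: inner_add_right)
      qed
      moreover have "p \<bullet> (x - xs) = yv \<bullet> (A *v (x - xs)) - zv \<bullet> (B *v (x - xs))"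
        unfolding p_def ys_def zs_def by (simp add: inner_diff_left tr_dot mv_neg dot_lmul_matrix)
      moreover have "yv \<bullet> (A *v xs - A *v x) = - (yv \<bullet> (A *v (x - xs)))"
        unfolding mv_diff by (simp add: inner_diff_right)
      ultimately have "fx + p \<bullet> (x - xs) \<le> a" by simp
      then show ?thesis using fx a by simp
    qed simp
  qed
  define cfv where "cfv = p \<bullet> xs - fx"
  define cgv where "cgv = ys \<bullet> (A *v xs) - gx"
  have cf: "conj f p = ereal cfv" unfolding cfv_def using conj_subgrad_eq[OF sf] fx by simp
  have cg: "conj g ys = ereal cgv" unfolding cgv_def using conj_subgrad_eq[OF sg] gx by simp
  have sum0: "cfv + cgv + b \<bullet> zs = - (fx + gx)"
  proof -
    have "p \<bullet> xs = - (ys \<bullet> (A *v xs)) - zs \<bullet> (B *v xs)"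
      unfolding p_def by (simp add: inner_diff_left tr_dot mv_neg dot_lmul_matrix)
    moreover have "zs \<bullet> (B *v xs) = b \<bullet> zs" using zu0 unfolding zs_def u0_def
      by (simp add: inner_diff_right inner_commute)
    ultimately show ?thesis unfolding cfv_def cgv_def by simp
  qed
  have XiS: "Xi f g A B b (ys, zs) = ereal (- (fx + gx))"
    unfolding Xi_def using cf cg sum0 unfolding p_def by simp
  have ThS: "Theta f g A xs = ereal (fx + gx)" unfolding Theta_def using fx gx by simp
  have sdz: "zs \<in> subdiff_Phi pos (B *v xs - b)"
    unfolding subdiff_Phi_def zs_def zv_def u0_def[symmetric] using l unfolding eqc_def by auto
  have zs_nn: "pos \<longrightarrow> (\<forall>i. zs $ i \<ge> 0)"
  proof (intro impI allI)
    fix i assume "pos"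
    have "(u0 $ i = 0 \<longrightarrow> (pos \<longrightarrow> 0 \<le> zs $ i)) \<and> (u0 $ i \<noteq> 0 \<longrightarrow> zs $ i = 0)"
      using sdz unfolding subdiff_Phi_def u0_def by simp
    then show "zs $ i \<ge> 0" using \<open>pos\<close> by (cases "u0 $ i = 0") auto
  qed
  have W: "ereal (- (fx + gx)) \<le> Xi f g A B b (y, z)" if "\<forall>i. u0 $ i \<noteq> 0 \<longrightarrow> z $ i = 0" for y z
  proof -
    have "z \<bullet> u0 = 0" unfolding inner_vec_def using that by (intro sum.neutral) auto
    then show ?thesis using Xi_ge[where f=f and g=g and xs=xs and fx=fx and gx=gx and A=A and z=z and B=B and b=b and y=y] fx gx unfolding u0_def by simp
  qed
  obtain m where m: "m > 0" "\<forall>i. m \<le> mu $ i" using min_pos[OF mu] by blast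
  have ev1: "eventually (\<lambda>w. ereal (- (fx + gx) - m) < Xi f g A B b w) (nhds (ys, zs))"
    using Xi_lsc[OF f(1) g(1) cf[unfolded p_def] cg m(1), of b] sum0 by simp
  have tsnd: "(snd \<longlongrightarrow> snd (ys, zs)) (nhds (ys, zs))" by (intro tendsto_intros filterlim_ident)
  have ev2: "eventually (\<lambda>w. \<forall>i. zs $ i \<noteq> 0 \<longrightarrow> snd w $ i \<noteq> 0 \<and> (0 < snd w $ i \<longleftrightarrow> 0 < zs $ i)) (nhds (ys, zs))"
    using stab[OF tsnd] by simp
  from ev1 ev2 have "eventually (\<lambda>w. ereal (- (fx + gx) - m) < Xi f g A B b w \<and>
      (\<forall>i. zs $ i \<noteq> 0 \<longrightarrow> snd w $ i \<noteq> 0 \<and> (0 < snd w $ i \<longleftrightarrow> 0 < zs $ i))) (nhds (ys, zs))"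
    by (rule eventually_conj)
  then obtain d where d: "d > 0" "\<forall>w. dist w (ys, zs) < d \<longrightarrow> ereal (- (fx + gx) - m) < Xi f g A B b w \<and>
      (\<forall>i. zs $ i \<noteq> 0 \<longrightarrow> snd w $ i \<noteq> 0 \<and> (0 < snd w $ i \<longleftrightarrow> 0 < zs $ i))"
    unfolding eventually_nhds_metric by blast
  have PsiS: "Psi pos mu zs = ereal (Phi False mu zs)" unfolding Psi_Phi using zs_nn by auto
  have Psige: "ereal (Phi False mu z) \<le> Psi pos mu z" for z unfolding Psi_Phi by auto
  have GDS: "GD pos f g A B b mu (ys, zs) = ereal (- (fx + gx) + Phi False mu zs)"
    unfolding GD_def XiS using PsiS by simp
  have lmin: "local_min (GD pos f g A B b mu) (ys, zs)"
    unfolding local_min_def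
  proof (intro exI conjI allI impI)
    show "d > 0" by fact
    fix w assume dw: "dist w (ys, zs) < d"
    obtain y z where w: "w = (y, z)" by (cases w)
    have lw: "ereal (- (fx + gx) - m) < Xi f g A B b (y, z)" and
      st: "\<forall>i. zs $ i \<noteq> 0 \<longrightarrow> z $ i \<noteq> 0 \<and> (0 < z $ i \<longleftrightarrow> 0 < zs $ i)"
      using d(2) dw unfolding w by auto
    have GDw: "Xi f g A B b (y, z) + ereal (Phi False mu z) \<le> GD pos f g A B b mu (y, z)"
      unfolding GD_def using Psige by (intro add_mono) auto
    show "GD pos f g A B b mu (ys, zs) \<le> GD pos f g A B b mu w"
    proof (cases "\<exists>i. zs $ i = 0 \<and> z $ i \<noteq> 0")
      case True
      then obtain i where i: "zs $ i = 0" "z $ i \<noteq> 0" by blast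
      have "Phi False mu zs + mu $ i \<le> Phi False mu z"
        using phi_cmp(2)[OF st mu, of i False] i unfolding act_def by simp
      then have ph: "Phi False mu zs + m \<le> Phi False mu z" using m(2)[rule_format, of i] by simp
      have "ereal (- (fx + gx) - m) + ereal (Phi False mu z) \<le> Xi f g A B b (y, z) + ereal (Phi False mu z)"
        using lw by (intro add_mono) auto
      moreover have "ereal (- (fx + gx) + Phi False mu zs) \<le> ereal (- (fx + gx) - m) + ereal (Phi False mu z)"
        using ph by simp
      ultimately have "ereal (- (fx + gx) + Phi False mu zs) \<le> Xi f g A B b (y, z) + ereal (Phi False mu z)"
        by (rule order_trans[rotated])
      then show ?thesis unfolding GDS w using GDw by (rule order_trans)
    next
      case False
      then have z0: "\<forall>i. zs $ i = 0 \<longrightarrow> z $ i = 0" by auto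
      have "Phi False mu z = Phi False mu zs"
        using phi_cmp(1)[OF st mu, of False] z0 unfolding act_def by simp
      moreover have "\<forall>i. u0 $ i \<noteq> 0 \<longrightarrow> z $ i = 0"
        using z0 sdz unfolding subdiff_Phi_def u0_def by auto
      then have "ereal (- (fx + gx)) \<le> Xi f g A B b (y, z)" by (rule W)
      ultimately have "ereal (- (fx + gx)) + ereal (Phi False mu zs) \<le> Xi f g A B b (y, z) + ereal (Phi False mu z)"
        by (intro add_mono) auto
      then have "ereal (- (fx + gx) + Phi False mu zs) \<le> Xi f g A B b (y, z) + ereal (Phi False mu z)"
        by simp
      then show ?thesis unfolding GDS w using GDw by (rule order_trans)
    qed
  qed
  show ?thesis
  proof (intro exI conjI)
    show "ys \<in> csubdiff g (A *v xs)" by fact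
    show "zs \<in> subdiff_Phi pos (B *v xs - b)" by fact
    show "local_min (GD pos f g A B b mu) (ys, zs)" by fact
    show "Theta f g A xs = - Xi f g A B b (ys, zs)" unfolding ThS XiS by simp
  qed
qed


declare transpose_matrix_vector[simp del]

lemma ereal3_nminf: "(a::ereal) \<noteq> -\<infinity> \<Longrightarrow> b \<noteq> -\<infinity> \<Longrightarrow> a + b + ereal c \<noteq> -\<infinity>"
  by (cases a; cases b) auto

lemma part2:
  fixes f :: "real^'n \<Rightarrow> ereal" and g :: "real^'m \<Rightarrow> ereal"
    and A :: "real^'n^'m" and B :: "real^'n^'r" and b :: "real^'r"
    and lam mu :: "real^'r" and pos :: bool
  assumes f: "proper_fun f" "lsc_fun f" "convex_fun f"
    and g: "proper_fun g" "lsc_fun g" "convex_fun g"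
    and lam: "\<forall>i. lam $ i > 0" and mu: "\<forall>i. mu $ i > 0"
    and lm: "local_min (GD pos f g A B b mu) (ys, zs)" and fin: "GD pos f g A B b mu (ys, zs) < \<infinity>"
    and sl: "- (transpose A *v y0) - transpose B *v z0 \<in> slater_dom (conj f)"
      "y0 \<in> slater_dom (conj g)" "\<forall>i. zs $ i = 0 \<longrightarrow> z0 $ i = 0"
  shows "\<exists>xs. xs \<in> csubdiff (conj f) (- (transpose A *v ys) - transpose B *v zs) \<and>
             local_min (FP pos f g A B b lam) xs \<and>
             Theta f g A xs = - Xi f g A B b (ys, zs)"
proof -
  have nf: "\<forall>x. f x \<noteq> -\<infinity>" using f(1) unfolding proper_fun_def by auto
  have ng: "\<forall>x. g x \<noteq> -\<infinity>" using g(1) unfolding proper_fun_def by auto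
  have ncf: "\<forall>x. conj f x \<noteq> -\<infinity>" using conj_nminf[OF f(1)] by auto
  have ncg: "\<forall>x. conj g x \<noteq> -\<infinity>" using conj_nminf[OF g(1)] by auto
  define q where "q y z = - (transpose A *v y) - transpose B *v z" for y z
  define ps where "ps = q ys zs"
  have Xiq: "Xi f g A B b (y, z) = conj f (q y z) + conj g y + ereal (b \<bullet> z)" for y z
    unfolding Xi_def q_def by simp
  have nXi: "Xi f g A B b w \<noteq> -\<infinity>" for w
    using ncf ncg unfolding Xi_def by (intro ereal3_nminf) auto
  have nPsi: "Psi pos mu z \<noteq> -\<infinity>" for z unfolding Psi_def by auto
  have "Xi f g A B b (ys, zs) < \<infinity> \<and> Psi pos mu zs < \<infinity>"
    using add_fin[OF nXi nPsi] fin unfolding GD_def by auto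
  then have XiF: "Xi f g A B b (ys, zs) < \<infinity>" and PsiF: "Psi pos mu zs < \<infinity>" by auto
  have "conj f ps + conj g ys < \<infinity>"
    using XiF unfolding Xiq ps_def by (cases "conj f (q ys zs) + conj g ys") auto
  then have "conj f ps < \<infinity> \<and> conj g ys < \<infinity>" using add_fin ncf ncg by blast
  then obtain cfv cgv where cf: "conj f ps = ereal cfv" and cg: "conj g ys = ereal cgv"
    using ereal_fin ncf ncg by metis
  define X0 where "X0 = cfv + cgv + b \<bullet> zs"
  have XiS: "Xi f g A B b (ys, zs) = ereal X0" unfolding Xiq X0_def using cf cg ps_def by simp
  have zs_nn: "pos \<longrightarrow> (\<forall>i. zs $ i \<ge> 0)" using PsiF unfolding Psi_def by (auto split: if_splits)
  have PsiS: "Psi pos mu zs = ereal (Phi False mu zs)" unfolding Psi_Phi using zs_nn by auto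
  have Psige: "ereal (Phi False mu z) \<le> Psi pos mu z" for z unfolding Psi_Phi by auto
  obtain e1 where e1: "e1 > 0" "\<forall>w. dist w (ys, zs) < e1 \<longrightarrow> GD pos f g A B b mu (ys, zs) \<le> GD pos f g A B b mu w"
    using lm unfolding local_min_def by blast
  have tsnd: "(snd \<longlongrightarrow> snd (ys, zs)) (nhds (ys, zs))" by (intro tendsto_intros filterlim_ident)
  have "eventually (\<lambda>w. \<forall>i. zs $ i \<noteq> 0 \<longrightarrow> snd w $ i \<noteq> 0 \<and> (0 < snd w $ i \<longleftrightarrow> 0 < zs $ i)) (nhds (ys, zs))"
    using stab[OF tsnd] by simp
  then obtain e2 where e2: "e2 > 0" "\<forall>w. dist w (ys, zs) < e2 \<longrightarrow> (\<forall>i. zs $ i \<noteq> 0 \<longrightarrow> snd w $ i \<noteq> 0 \<and> (0 < snd w $ i \<longleftrightarrow> 0 < zs $ i))"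
    unfolding eventually_nhds_metric by blast
  define e where "e = min e1 e2"
  have ep: "e > 0" using e1 e2 unfolding e_def by simp
  have LOC: "ereal X0 \<le> Xi f g A B b w" if dw: "dist w (ys, zs) < e" and zw: "\<forall>i. zs $ i = 0 \<longrightarrow> snd w $ i = 0" for w
  proof -
    have st: "\<forall>i. zs $ i \<noteq> 0 \<longrightarrow> snd w $ i \<noteq> 0 \<and> (0 < snd w $ i \<longleftrightarrow> 0 < zs $ i)"
    proof -
      have "dist w (ys, zs) < e2" using dw unfolding e_def by simp
      then show ?thesis using e2(2) by blast
    qed
    have ph: "Phi False mu (snd w) = Phi False mu zs"
      using phi_cmp(1)[OF st mu, of False] zw unfolding act_def by simp
    have nn: "pos \<longrightarrow> (\<forall>i. snd w $ i \<ge> 0)"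
    proof (intro impI allI)
      fix i assume pos
      show "snd w $ i \<ge> 0"
      proof (cases "zs $ i = 0")
        case True then show ?thesis using zw by simp
      next
        case False
        then have "zs $ i > 0" using zs_nn \<open>pos\<close> by (metis less_eq_real_def)
        then have "0 < snd w $ i" using st[rule_format, OF False] by simp
        then show ?thesis by simp
      qed
    qed
    have "Psi pos mu (snd w) = Psi pos mu zs" unfolding Psi_Phi using nn zs_nn ph by auto
    moreover have "GD pos f g A B b mu (ys, zs) \<le> GD pos f g A B b mu w"
    proof -
      have "dist w (ys, zs) < e1" using dw unfolding e_def by simp
      then show ?thesis using e1(2) by blast
    qed
    ultimately have "Xi f g A B b (ys, zs) + ereal (Phi False mu zs) \<le> Xi f g A B b w + ereal (Phi False mu zs)"
      unfolding GD_def by (cases w) (simp add: PsiS)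
    then show ?thesis unfolding XiS by (rule ereal_cancel_le)
  qed
  have OPT: "ereal X0 \<le> Xi f g A B b (y, z)" if zz: "\<forall>i. zs $ i = 0 \<longrightarrow> z $ i = 0" for y z
  proof (cases "Xi f g A B b (y, z) < \<infinity>")
    case False then show ?thesis by simp
  next
    case True
    then have "conj f (q y z) + conj g y < \<infinity>"
      unfolding Xiq by (cases "conj f (q y z) + conj g y") auto
    then have "conj f (q y z) < \<infinity> \<and> conj g y < \<infinity>" using add_fin ncf ncg by blast
    then obtain a c where a: "conj f (q y z) = ereal a" and c: "conj g y = ereal c" using ereal_fin ncf ncg by metis
    have np: "norm ((y, z) - (ys, zs)) + 1 > 0" by (metis add_pos_nonneg norm_ge_zero zero_less_one add.commute)
    define \<theta> where "\<theta> = min 1 (e / (2 * (norm ((y, z) - (ys, zs)) + 1)))"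
    have th0: "\<theta> > 0" using ep np unfolding \<theta>_def by simp
    have th1: "\<theta> \<le> 1" unfolding \<theta>_def by simp
    define wt where "wt = (1 - \<theta>) *\<^sub>R (ys, zs) + \<theta> *\<^sub>R (y, z)"
    have dwt: "dist wt (ys, zs) < e"
    proof -
      have "wt - (ys, zs) = \<theta> *\<^sub>R ((y, z) - (ys, zs))" unfolding wt_def by (simp add: algebra_simps)
      then have "dist wt (ys, zs) = norm (\<theta> *\<^sub>R ((y, z) - (ys, zs)))" by (simp only: dist_norm)
      also have "\<dots> = \<theta> * norm ((y, z) - (ys, zs))" using th0 by (metis norm_scaleR abs_of_pos)
      also have "\<dots> \<le> e / (2 * (norm ((y, z) - (ys, zs)) + 1)) * norm ((y, z) - (ys, zs))"
        unfolding \<theta>_def by (intro mult_right_mono) auto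
      also have "\<dots> < e"
      proof -
        have "e / (2 * (norm ((y, z) - (ys, zs)) + 1)) * norm ((y, z) - (ys, zs)) \<le>
            e / (2 * (norm ((y, z) - (ys, zs)) + 1)) * (norm ((y, z) - (ys, zs)) + 1)"
          using ep np by (intro mult_left_mono) auto
        also have "\<dots> = e / 2" using np by (simp add: field_simps)
        finally have "e / (2 * (norm ((y, z) - (ys, zs)) + 1)) * norm ((y, z) - (ys, zs)) \<le> e / 2" .
        then show ?thesis using ep by linarith
      qed
      finally show ?thesis .
    qed
    have wts: "snd wt = (1 - \<theta>) *\<^sub>R zs + \<theta> *\<^sub>R z" "fst wt = (1 - \<theta>) *\<^sub>R ys + \<theta> *\<^sub>R y"
      unfolding wt_def by simp_all
    have zwt: "\<forall>i. zs $ i = 0 \<longrightarrow> snd wt $ i = 0" using zz unfolding wts by simp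
    have l: "ereal X0 \<le> Xi f g A B b wt" using LOC[OF dwt zwt] .
    have qwt: "q (fst wt) (snd wt) = (1 - \<theta>) *\<^sub>R ps + \<theta> *\<^sub>R q y z"
      unfolding wts ps_def q_def mv_comb by (simp add: algebra_simps)
    have c1: "conj f (q (fst wt) (snd wt)) \<le> ereal ((1 - \<theta>) * cfv + \<theta> * a)"
      unfolding qwt using convex_fun_ineq[OF convex_conj[OF nf] cf a] th0 th1 by simp
    have c2: "conj g (fst wt) \<le> ereal ((1 - \<theta>) * cgv + \<theta> * c)"
      unfolding wts using convex_fun_ineq[OF convex_conj[OF ng] cg c] th0 th1 by simp
    have "Xi f g A B b wt \<le> ereal ((1 - \<theta>) * cfv + \<theta> * a) + ereal ((1 - \<theta>) * cgv + \<theta> * c) + ereal (b \<bullet> snd wt)"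
    proof -
      have "conj f (q (fst wt) (snd wt)) + conj g (fst wt) + ereal (b \<bullet> snd wt) \<le>
          ereal ((1 - \<theta>) * cfv + \<theta> * a) + ereal ((1 - \<theta>) * cgv + \<theta> * c) + ereal (b \<bullet> snd wt)"
        by (intro add_mono c1 c2 order_refl)
      then show ?thesis using Xiq[of "fst wt" "snd wt"] by simp
    qed
    then have "ereal X0 \<le> ereal ((1 - \<theta>) * cfv + \<theta> * a) + ereal ((1 - \<theta>) * cgv + \<theta> * c) + ereal (b \<bullet> snd wt)"
      using l by (rule order_trans[rotated])
    then have "X0 \<le> (1 - \<theta>) * X0 + \<theta> * (a + c + b \<bullet> z)"
      unfolding wts X0_def by (simp add: inner_add_right algebra_simps)
    then have "\<theta> * X0 \<le> \<theta> * (a + c + b \<bullet> z)" by (simp add: algebra_simps)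
    then have "X0 \<le> a + c + b \<bullet> z" using th0 by simp
    then show ?thesis unfolding Xiq using a c by simp
  qed
  define a1 :: "'n + 'r \<Rightarrow> real^'n" where "a1 k = (case k of Inl j \<Rightarrow> axis j 1 | Inr i \<Rightarrow> 0)" for k
  define a2 :: "'n + 'r \<Rightarrow> real^'m" where "a2 k = (case k of Inl j \<Rightarrow> transpose A $ j | Inr i \<Rightarrow> 0)" for k
  define a3 :: "'n + 'r \<Rightarrow> real^'r" where
    "a3 k = (case k of Inl j \<Rightarrow> transpose B $ j | Inr i \<Rightarrow> if zs $ i = 0 then axis i 1 else 0)" for k
  define bt :: "'n + 'r \<Rightarrow> real" where "bt k = 0" for k
  define eqc :: "'n + 'r \<Rightarrow> bool" where "eqc k = True" for k
  have gf: "gfeas a1 a2 a3 bt eqc p y z \<longleftrightarrow> p = q y z \<and> (\<forall>i. zs $ i = 0 \<longrightarrow> z $ i = 0)" for p y z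
  proof -
    have "gfeas a1 a2 a3 bt eqc p y z \<longleftrightarrow> (\<forall>j. p $ j + (transpose A *v y) $ j + (transpose B *v z) $ j = 0) \<and>
       (\<forall>i. zs $ i = 0 \<longrightarrow> z $ i = 0)"
      unfolding gfeas_def all_sum a1_def a2_def a3_def bt_def eqc_def
      by (auto simp: axis_dot mv_row)
    also have "\<dots> \<longleftrightarrow> p = q y z \<and> (\<forall>i. zs $ i = 0 \<longrightarrow> z $ i = 0)"
    proof -
      have pt: "(p $ j + (transpose A *v y) $ j + (transpose B *v z) $ j = 0) = (p $ j = q y z $ j)" for j
        unfolding q_def by (simp; arith)
      show ?thesis unfolding pt vec_eq_iff ..
    qed
    finally show ?thesis .
  qed
  have xsfe: "gfeas a1 a2 a3 bt eqc ps ys zs" unfolding gf ps_def by simp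
  have x0fe: "gfeas a1 a2 a3 bt eqc (q y0 z0) y0 z0" unfolding gf using sl(3) by simp
  have optg: "conj f ps + conj g ys + ereal (b \<bullet> zs) \<le> conj f p + conj g y + ereal (b \<bullet> z)"
    if "gfeas a1 a2 a3 bt eqc p y z" for p y z
    using OPT[of z y] that XiS unfolding gf Xiq by (auto simp: ps_def)
  have slq: "q y0 z0 \<in> slater_dom (conj f)" using sl(1) unfolding q_def .
  obtain l where
    Lg: "\<forall>p y z. conj f p < \<infinity> \<longrightarrow> conj g y < \<infinity> \<longrightarrow>
      real_of_ereal (conj f ps) + real_of_ereal (conj g ys) + b \<bullet> zs \<le>
      real_of_ereal (conj f p) + real_of_ereal (conj g y) + b \<bullet> z +
        (\<Sum>k\<in>UNIV. l k * (a1 k \<bullet> p + a2 k \<bullet> y + a3 k \<bullet> z - bt k))"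
    using gen_mult[of "conj f" "conj g" ps ys a1 a2 a3 bt eqc zs b "q y0 z0" y0 z0]
      ncf ncg convex_conj[OF nf] convex_conj[OF ng] cf cg xsfe optg slq sl(2) x0fe by auto
  define xv :: "real^'n" where "xv = (\<chi> j. l (Inl j))"
  define zt :: "real^'r" where "zt = (\<chi> i. if zs $ i = 0 then l (Inr i) else 0)"
  have sumeq: "(\<Sum>k\<in>UNIV. l k * (a1 k \<bullet> p + a2 k \<bullet> y + a3 k \<bullet> z - bt k)) =
      xv \<bullet> (p + transpose A *v y + transpose B *v z) + zt \<bullet> z" for p y z
  proof -
    have "(\<Sum>k\<in>UNIV. l k * (a1 k \<bullet> p + a2 k \<bullet> y + a3 k \<bullet> z - bt k)) =
      (\<Sum>j\<in>UNIV. l (Inl j) * (p + transpose A *v y + transpose B *v z) $ j) +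
      (\<Sum>i\<in>UNIV. (if zs $ i = 0 then l (Inr i) else 0) * z $ i)"
      unfolding sum_UNIV_Plus a1_def a2_def a3_def bt_def
      by (intro arg_cong2[where f="(+)"] sum.cong) (auto simp: axis_dot mv_row)
    then show ?thesis unfolding xv_def zt_def inner_vec_def by simp
  qed
  have Lag: "cfv + cgv + b \<bullet> zs \<le> real_of_ereal (conj f p) + real_of_ereal (conj g y) + b \<bullet> z +
      (xv \<bullet> (p + transpose A *v y + transpose B *v z) + zt \<bullet> z)"
    if "conj f p < \<infinity>" "conj g y < \<infinity>" for p y z
    using Lg[rule_format, OF that, of z] sumeq[of p y z] cf cg by simp
  have zt0: "zt \<bullet> zs = 0" unfolding zt_def inner_vec_def by (intro sum.neutral) auto
  have pse: "ps + transpose A *v ys + transpose B *v zs = 0" unfolding ps_def q_def by simp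
  define xs where "xs = - xv"
  have sfc: "xs \<in> csubdiff (conj f) ps"
    unfolding csubdiff_def
  proof (intro CollectI conjI allI)
    show "\<bar>conj f ps\<bar> \<noteq> \<infinity>" using cf by simp
    fix p show "conj f ps + ereal (xs \<bullet> (p - ps)) \<le> conj f p"
    proof (cases "conj f p < \<infinity>")
      case True
      then obtain a where a: "conj f p = ereal a" using ncf ereal_fin by metis
      have pe: "p + transpose A *v ys + transpose B *v zs = p - ps"
        unfolding ps_def q_def by (simp add: algebra_simps)
      have "cfv + cgv + b \<bullet> zs \<le> a + cgv + b \<bullet> zs + xv \<bullet> (p - ps)"
        using Lag[of p ys zs, unfolded pe] True a cg zt0 by simp
      then show ?thesis using cf a unfolding xs_def by (simp add: inner_diff_right)
    qed simp
  qed
  have sgc: "A *v xs \<in> csubdiff (conj g) ys"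
    unfolding csubdiff_def
  proof (intro CollectI conjI allI)
    show "\<bar>conj g ys\<bar> \<noteq> \<infinity>" using cg by simp
    fix y show "conj g ys + ereal ((A *v xs) \<bullet> (y - ys)) \<le> conj g y"
    proof (cases "conj g y < \<infinity>")
      case True
      then obtain c where c: "conj g y = ereal c" using ncg ereal_fin by metis
      have pe: "ps + transpose A *v y + transpose B *v zs = transpose A *v (y - ys)"
        unfolding ps_def q_def mv_diff by (simp add: algebra_simps)
      have "cfv + cgv + b \<bullet> zs \<le> cfv + c + b \<bullet> zs + xv \<bullet> (transpose A *v (y - ys))"
        using Lag[of ps y zs, unfolded pe] True c cf zt0 by simp
      moreover have "xv \<bullet> (transpose A *v (y - ys)) = - ((A *v xs) \<bullet> (y - ys))"
        unfolding xs_def using tr_dot[of A "y - ys" xv] by (simp add: inner_commute mv_neg)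
      ultimately show ?thesis using cg c by simp
    qed simp
  qed
  define dv where "dv = b + B *v xv + zt"
  have dge: "0 \<le> dv \<bullet> (z - zs)" for z
  proof -
    have pe: "ps + transpose A *v ys + transpose B *v z = transpose B *v (z - zs)"
      unfolding ps_def q_def mv_diff by (simp add: algebra_simps)
    have "cfv + cgv + b \<bullet> zs \<le> cfv + cgv + b \<bullet> z + xv \<bullet> (transpose B *v (z - zs)) + zt \<bullet> z"
      using Lag[of ps ys z, unfolded pe] cf cg by simp
    moreover have "xv \<bullet> (transpose B *v (z - zs)) = (B *v xv) \<bullet> (z - zs)"
      using tr_dot[of B "z - zs" xv] by (simp add: inner_commute)
    moreover have "zt \<bullet> z = zt \<bullet> (z - zs)" using zt0 by (simp add: inner_diff_right)
    moreover have "dv \<bullet> (z - zs) = b \<bullet> z - b \<bullet> zs + (B *v xv) \<bullet> (z - zs) + zt \<bullet> (z - zs)"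
      unfolding dv_def by (simp only: inner_add_left inner_diff_right)
    ultimately show ?thesis by linarith
  qed
  have "dv = 0"
  proof -
    have "0 \<le> dv \<bullet> ((zs - dv) - zs)" by (rule dge)
    moreover have "(zs - dv) - zs = - dv" by simp
    ultimately have "0 \<le> - (dv \<bullet> dv)" by (simp only: inner_minus_right)
    then have "dv \<bullet> dv = 0" using inner_ge_zero[of dv] by linarith
    then show ?thesis by (simp only: inner_eq_zero_iff)
  qed
  then have Bxs: "(B *v xs - b) $ i = 0" if zi: "zs $ i \<noteq> 0" for i
  proof -
    have "(b + B *v xv + zt) $ i = 0" using \<open>dv = 0\<close> unfolding dv_def by simp
    moreover have "zt $ i = 0" using zi unfolding zt_def by simp
    moreover have "(B *v xs - b) $ i = - ((B *v xv) $ i) - b $ i" unfolding xs_def mv_neg by simp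
    ultimately show ?thesis by simp
  qed
  have fxs: "f xs = ereal (xs \<bullet> ps - cfv)" using biconj_subgrad[OF f sfc] cf by simp
  have gxs: "g (A *v xs) = ereal ((A *v xs) \<bullet> ys - cgv)" using biconj_subgrad[OF g sgc] cg by simp
  have zB: "zs \<bullet> (B *v xs - b) = 0"
    unfolding inner_vec_def using Bxs by (intro sum.neutral) auto
  have psx: "ps \<bullet> x = - (ys \<bullet> (A *v x)) - zs \<bullet> (B *v x)" for x
    unfolding ps_def q_def by (simp add: inner_diff_left tr_dot)
  define T0 where "T0 = xs \<bullet> ps - cfv + ((A *v xs) \<bullet> ys - cgv)"
  have T0e: "T0 = - X0"
  proof -
    have "xs \<bullet> ps = - (ys \<bullet> (A *v xs)) - zs \<bullet> (B *v xs)" using psx[of xs] by (simp add: inner_commute)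
    moreover have "zs \<bullet> (B *v xs) = b \<bullet> zs" using zB by (simp add: inner_diff_right inner_commute)
    ultimately show ?thesis unfolding T0_def X0_def by (simp add: inner_commute)
  qed
  have ThS: "Theta f g A xs = ereal (- X0)" unfolding Theta_def fxs gxs T0e[symmetric] T0_def by simp
  have W: "Theta f g A xs \<le> Theta f g A x" if cx: "\<forall>i. zs $ i \<noteq> 0 \<longrightarrow> \<not> act pos (B *v x - b) i" for x
  proof (cases "Theta f g A x < \<infinity>")
    case False then show ?thesis by simp
  next
    case True
    then have "f x < \<infinity> \<and> g (A *v x) < \<infinity>" using add_fin nf ng unfolding Theta_def by blast
    then obtain a c where a: "f x = ereal a" and c: "g (A *v x) = ereal c" using ereal_fin nf ng by metis
    have c1: "ps \<bullet> x - a \<le> cfv" using conj_ge[of ps x f] a cf by simp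
    have c2: "ys \<bullet> (A *v x) - c \<le> cgv" using conj_ge[of ys "A *v x" g] c cg by simp
    have zn: "zs \<bullet> (B *v x - b) \<le> 0"
      unfolding inner_vec_def inner_real_def
    proof (intro sum_nonpos)
      fix i :: 'r assume "i \<in> UNIV"
      show "zs $ i * (B *v x - b) $ i \<le> 0"
      proof (cases "zs $ i = 0")
        case False
        then have na: "\<not> act pos (B *v x - b) i" using cx by auto
        show ?thesis
        proof (cases pos)
          case True
          then have "zs $ i > 0" using zs_nn False by (metis less_eq_real_def)
          moreover have "(B *v x - b) $ i \<le> 0" using na True unfolding act_def by simp
          ultimately show ?thesis by (simp add: mult_nonneg_nonpos)
        next
          case False
          then show ?thesis using na unfolding act_def by simp
        qed
      qed simp
    qed
    have "- X0 \<le> a + c"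
    proof -
      have "ps \<bullet> x + ys \<bullet> (A *v x) = - (zs \<bullet> (B *v x))" using psx[of x] by simp
      moreover have "zs \<bullet> (B *v x) = zs \<bullet> (B *v x - b) + b \<bullet> zs" by (simp add: inner_diff_right inner_commute)
      ultimately show ?thesis using c1 c2 zn unfolding X0_def by linarith
    qed
    then show ?thesis using ThS a c unfolding Theta_def by simp
  qed
  define u1 where "u1 = B *v xs - b"
  obtain m where m: "m > 0" "\<forall>i. m \<le> lam $ i" using min_pos[OF lam] by blast
  have fxs': "f xs = ereal (xs \<bullet> ps - cfv)" by (rule fxs)
  have ev1: "eventually (\<lambda>x. ereal ((xs \<bullet> ps - cfv) + ((A *v xs) \<bullet> ys - cgv) - m) < Theta f g A x) (nhds xs)"
    by (rule lsc_Theta[OF f(2) g(2) fxs gxs m(1)])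
  have tB: "((\<lambda>x. B *v x - b) \<longlongrightarrow> B *v xs - b) (nhds xs)" by (intro tendsto_intros mv_tendsto)
  have ev2: "eventually (\<lambda>x. \<forall>i. u1 $ i \<noteq> 0 \<longrightarrow> (B *v x - b) $ i \<noteq> 0 \<and> (0 < (B *v x - b) $ i \<longleftrightarrow> 0 < u1 $ i)) (nhds xs)"
    using stab[OF tB] unfolding u1_def .
  from ev1 ev2 have "eventually (\<lambda>x. ereal (- X0 - m) < Theta f g A x \<and>
      (\<forall>i. u1 $ i \<noteq> 0 \<longrightarrow> (B *v x - b) $ i \<noteq> 0 \<and> (0 < (B *v x - b) $ i \<longleftrightarrow> 0 < u1 $ i))) (nhds xs)"
  proof -
    have "(xs \<bullet> ps - cfv) + ((A *v xs) \<bullet> ys - cgv) = - X0" using T0e unfolding T0_def .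
    then have "eventually (\<lambda>x. ereal (- X0 - m) < Theta f g A x) (nhds xs)" using ev1 by simp
    then show ?thesis using ev2 by (rule eventually_conj)
  qed
  then obtain d where d: "d > 0" "\<forall>x. dist x xs < d \<longrightarrow> ereal (- X0 - m) < Theta f g A x \<and>
      (\<forall>i. u1 $ i \<noteq> 0 \<longrightarrow> (B *v x - b) $ i \<noteq> 0 \<and> (0 < (B *v x - b) $ i \<longleftrightarrow> 0 < u1 $ i))"
    unfolding eventually_nhds_metric by blast
  have FPS: "FP pos f g A B b lam xs = ereal (- X0 + Phi pos lam u1)" unfolding FP_def ThS u1_def by simp
  have lmin: "local_min (FP pos f g A B b lam) xs"
    unfolding local_min_def
  proof (intro exI conjI allI impI)
    show "d > 0" by fact
    fix x assume dx: "dist x xs < d"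
    have lx: "ereal (- X0 - m) < Theta f g A x" and
      st: "\<forall>i. u1 $ i \<noteq> 0 \<longrightarrow> (B *v x - b) $ i \<noteq> 0 \<and> (0 < (B *v x - b) $ i \<longleftrightarrow> 0 < u1 $ i)"
      using d(2) dx by auto
    show "FP pos f g A B b lam xs \<le> FP pos f g A B b lam x"
    proof (cases "\<exists>i. u1 $ i = 0 \<and> act pos (B *v x - b) i")
      case True
      then obtain i where i: "u1 $ i = 0" "act pos (B *v x - b) i" by blast
      have "Phi pos lam u1 + lam $ i \<le> Phi pos lam (B *v x - b)"
        using phi_cmp(2)[OF st lam, of i pos] i by simp
      then have ph: "Phi pos lam u1 + m \<le> Phi pos lam (B *v x - b)" using m(2)[rule_format, of i] by simp
      have "ereal (- X0 - m) + ereal (Phi pos lam (B *v x - b)) \<le> Theta f g A x + ereal (Phi pos lam (B *v x - b))"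
        using lx by (intro add_mono) auto
      moreover have "ereal (- X0 + Phi pos lam u1) \<le> ereal (- X0 - m) + ereal (Phi pos lam (B *v x - b))"
        using ph by simp
      ultimately show ?thesis unfolding FPS unfolding FP_def by (rule order_trans[rotated])
    next
      case False
      then have na: "\<forall>i. u1 $ i = 0 \<longrightarrow> \<not> act pos (B *v x - b) i" by auto
      have "Phi pos lam (B *v x - b) = Phi pos lam u1" using phi_cmp(1)[OF st lam, of pos] na by simp
      moreover have "Theta f g A xs \<le> Theta f g A x"
        by (rule W) (use na Bxs in \<open>auto simp: u1_def\<close>)
      ultimately have "ereal (- X0) + ereal (Phi pos lam u1) \<le> Theta f g A x + ereal (Phi pos lam (B *v x - b))"
        using ThS by (intro add_mono) auto
      then show ?thesis unfolding FPS unfolding FP_def by simp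
    qed
  qed
  show ?thesis
  proof (intro exI conjI)
    show "xs \<in> csubdiff (conj f) (- (transpose A *v ys) - transpose B *v zs)" using sfc unfolding ps_def q_def .
    show "local_min (FP pos f g A B b lam) xs" by fact
    show "Theta f g A xs = - Xi f g A B b (ys, zs)" unfolding ThS XiS by simp
  qed
qed


theorem mainTheorem17:
  fixes f :: "real^'n \<Rightarrow> ereal" and g :: "real^'m \<Rightarrow> ereal"
    and A :: "real^'n^'m" and B :: "real^'n^'r" and b :: "real^'r"
    and lam mu :: "real^'r" and pos :: bool
  assumes f: "proper_fun f" "lsc_fun f" "convex_fun f"
    and g: "proper_fun g" "lsc_fun g" "convex_fun g"
    and lam: "\<forall>i. lam $ i > 0" and mu: "\<forall>i. mu $ i > 0"
  shows
   "(\<forall>xs. local_min (FP pos f g A B b lam) xs \<and> FP pos f g A B b lam xs < \<infinity> \<and>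
        (\<exists>x. x \<in> slater_dom f \<and> A *v x \<in> slater_dom g \<and>
             (\<forall>i. (B *v xs - b) $ i = 0 \<longrightarrow>
                  (if pos then (B *v x - b) $ i \<le> 0 else (B *v x - b) $ i = 0)))
      \<longrightarrow> (\<exists>ys zs. ys \<in> csubdiff g (A *v xs) \<and> zs \<in> subdiff_Phi pos (B *v xs - b) \<and>
             local_min (GD pos f g A B b mu) (ys, zs) \<and>
             Theta f g A xs = - Xi f g A B b (ys, zs)))
    \<and>
    (\<forall>ys zs. local_min (GD pos f g A B b mu) (ys, zs) \<and> GD pos f g A B b mu (ys, zs) < \<infinity> \<and>
        (\<exists>y z. - (transpose A *v y) - transpose B *v z \<in> slater_dom (conj f) \<and>
             y \<in> slater_dom (conj g) \<and>
             (\<forall>i. zs $ i = 0 \<longrightarrow> z $ i = 0) \<and>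
             (pos \<longrightarrow> (\<forall>i. zs $ i \<noteq> 0 \<longrightarrow> z $ i \<ge> 0)))
      \<longrightarrow> (\<exists>xs. xs \<in> csubdiff (conj f) (- (transpose A *v ys) - transpose B *v zs) \<and>
             local_min (FP pos f g A B b lam) xs \<and>
             Theta f g A xs = - Xi f g A B b (ys, zs)))"
  proof (intro conjI allI impI)
  fix xs
  assume H: "local_min (FP pos f g A B b lam) xs \<and> FP pos f g A B b lam xs < \<infinity> \<and>
        (\<exists>x. x \<in> slater_dom f \<and> A *v x \<in> slater_dom g \<and>
             (\<forall>i. (B *v xs - b) $ i = 0 \<longrightarrow>
                  (if pos then (B *v x - b) $ i \<le> 0 else (B *v x - b) $ i = 0)))"
  then obtain x0 where x0: "x0 \<in> slater_dom f" "A *v x0 \<in> slater_dom g"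
      "\<forall>i. (B *v xs - b) $ i = 0 \<longrightarrow> (if pos then (B *v x0 - b) $ i \<le> 0 else (B *v x0 - b) $ i = 0)"
    by blast
  show "\<exists>ys zs. ys \<in> csubdiff g (A *v xs) \<and> zs \<in> subdiff_Phi pos (B *v xs - b) \<and>
             local_min (GD pos f g A B b mu) (ys, zs) \<and>
             Theta f g A xs = - Xi f g A B b (ys, zs)"
    using part1[OF f g lam mu _ _ x0] H by blast
next
  fix ys zs
  assume H: "local_min (GD pos f g A B b mu) (ys, zs) \<and> GD pos f g A B b mu (ys, zs) < \<infinity> \<and>
        (\<exists>y z. - (transpose A *v y) - transpose B *v z \<in> slater_dom (conj f) \<and>
             y \<in> slater_dom (conj g) \<and>
             (\<forall>i. zs $ i = 0 \<longrightarrow> z $ i = 0) \<and>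
             (pos \<longrightarrow> (\<forall>i. zs $ i \<noteq> 0 \<longrightarrow> z $ i \<ge> 0)))"
  then obtain y0 z0 where s: "- (transpose A *v y0) - transpose B *v z0 \<in> slater_dom (conj f)"
      "y0 \<in> slater_dom (conj g)" "\<forall>i. zs $ i = 0 \<longrightarrow> z0 $ i = 0"
    by blast
  show "\<exists>xs. xs \<in> csubdiff (conj f) (- (transpose A *v ys) - transpose B *v zs) \<and>
             local_min (FP pos f g A B b lam) xs \<and>
             Theta f g A xs = - Xi f g A B b (ys, zs)"
    using part2[OF f g lam mu _ _ s] H by blast
qed

end
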